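(* Let $G\in\mathrm{C}^1(\mathbb{R})$ be coercive, $V\in\mathrm{Lip}(\mathbb{R})$ $1$-periodic, $\theta\in\mathbb{R}$, and let $\overline{H}$, $f_\theta$, $I_\theta$, $B_\theta$, $b(\theta)$ be as in the context (with $I_\theta(1)\neq0$). (a) If $I_\theta(1)>0$, then for all sufficiently small $h>0$ there is $\theta^*\in(\theta,\theta+hb(\theta))$ with $\overline{H}(\theta^* )=\overline{H}(\theta)+h/2>\overline{H}(\theta)$. (b) If $I_\theta(1)<0$, then for all sufficiently small $h>0$ there is $\theta^*\in(\theta-hb(\theta),\theta)$ with $\overline{H}(\theta^* )=\overline{H}(\theta)+h/2>\overline{H}(\theta)$.
   Context: $G$ coercive means $G(p)\to\infty$ as $p\to\pm\infty$. For each $\theta\in\mathbb{R}$, $\overline{H}(\theta)\in\mathbb{R}$ and the $1$-periodic $f_\theta\in\mathrm{C}^1(\mathbb{R})$ are the unique number and function with $\int_0^1 f_\theta=\theta$ and $f_\theta'(x)+G(f_\theta(x))+V(x)=\overline{H}(\theta)$ for all $x$. Set $I_\theta(x)=\int_0^x G'(f_\theta(y))\,dy$ and $B_\theta(x)=\int_0^x e^{I_\theta(y)}dy$. When $I_\theta(1)\ne0$, let $g_\theta(x)=s\big(B_\theta(x)+\frac{B_\theta(1)}{e^{I_\theta(1)}-1}\big)e^{-I_\theta(x)}$ where $s=1$ if $I_\theta(1)>0$ and $s=-1$ if $I_\theta(1)<0$; this is the $1$-periodic positive $\mathrm{C}^1$ solution of $g'+G'(f_\theta)g=s$. Define $b(\theta)=\int_0^1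 g_\theta(x)\,dx>0$. *)

theory Defs
  imports "HOL-Analysis.Analysis"
begin

definition cell_sol ::
  "(real \<Rightarrow> real) \<Rightarrow> (real \<Rightarrow> real) \<Rightarrow> real \<Rightarrow> real \<Rightarrow> (real \<Rightarrow> real) \<Rightarrow> bool" where
  "cell_sol G V \<theta> c f \<longleftrightarrow>
     (\<forall>x. f (x + 1) = f x) \<and>
     (\<exists>f'. continuous_on UNIV f' \<and> (\<forall>x. (f has_real_derivative f' x) (at x)) \<and>
           (\<forall>x. f' x + G (f x) + V x = c)) \<and>
     integral {0..1} f = \<theta>"

definition Hbar :: "(real \<Rightarrow> real) \<Rightarrow> (real \<Rightarrow> real) \<Rightarrow> real \<Rightarrow> real" where
  "Hbar G V \<theta> = (THE c. \<exists>f. cell_sol G V \<theta> c f)"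

definition fsol :: "(real \<Rightarrow> real) \<Rightarrow> (real \<Rightarrow> real) \<Rightarrow> real \<Rightarrow> real \<Rightarrow> real" where
  "fsol G V \<theta> = (THE f. cell_sol G V \<theta> (Hbar G V \<theta>) f)"

definition Ifun :: "(real \<Rightarrow> real) \<Rightarrow> (real \<Rightarrow> real) \<Rightarrow> (real \<Rightarrow> real) \<Rightarrow> real \<Rightarrow> real \<Rightarrow> real" where
  "Ifun G G' V \<theta> x = integral {0..x} (\<lambda>y. G' (fsol G V \<theta> y))"

definition Bfun :: "(real \<Rightarrow> real) \<Rightarrow> (real \<Rightarrow> real) \<Rightarrow> (real \<Rightarrow> real) \<Rightarrow> real \<Rightarrow> real \<Rightarrow> real" where
  "Bfun G G' V \<theta> x = integral {0..x} (\<lambda>y. exp (Ifun G G' V \<theta> y))"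

definition gfun :: "(real \<Rightarrow> real) \<Rightarrow> (real \<Rightarrow> real) \<Rightarrow> (real \<Rightarrow> real) \<Rightarrow> real \<Rightarrow> real \<Rightarrow> real" where
  "gfun G G' V \<theta> x =
     (let s = (if Ifun G G' V \<theta> 1 > 0 then 1 else -1) in
      s * (Bfun G G' V \<theta> x + Bfun G G' V \<theta> 1 / (exp (Ifun G G' V \<theta> 1) - 1))
        * exp (- Ifun G G' V \<theta> x))"

definition bfun :: "(real \<Rightarrow> real) \<Rightarrow> (real \<Rightarrow> real) \<Rightarrow> (real \<Rightarrow> real) \<Rightarrow> real \<Rightarrow> real" where
  "bfun G G' V \<theta> = integral {0..1} (gfun G G' V \<theta>)"

end

theory Submission
  imports Defs "HOL-Analysis.Analysis"
begin

lemma deriv_nonneg_mono: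
  fixes f f' :: "real \<Rightarrow> real"
  assumes d: "\<And>x. x\<in>{a..b} \<Longrightarrow> (f has_real_derivative f' x) (at x within {a..b})"
    and nn: "\<And>x. x\<in>{a..b} \<Longrightarrow> f' x \<ge> 0" and "a \<le> x" "x \<le> y" "y \<le> b"
  shows "f x \<le> f y"
proof (rule DERIV_nonneg_imp_increasing_open[OF \<open>x \<le> y\<close>])
  fix t assume t: "x < t" "t < y"
  have "at t within {a..b} = at t"
    by (rule at_within_interior) (use t assms in auto)
  then show "\<exists>z. DERIV f t :> z \<and> z \<ge> 0"
    using d[of t] nn[of t] t assms by auto
next
  have "continuous_on {a..b} f" by (rule DERIV_continuous_on[OF d])
  then show "continuous_on {x..y} f" by (rule continuous_on_subset) (use assms in auto)
qed

lemma bound_img: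
  fixes f :: "real \<Rightarrow> real"
  assumes "compact (f ` S)" shows "\<exists>M. \<forall>x\<in>S. \<bar>f x\<bar> \<le> M"
proof -
  obtain a where "\<forall>y\<in>f ` S. norm y \<le> a"
    using compact_imp_bounded[OF assms] unfolding bounded_iff by blast
  then show ?thesis by auto
qed

locale ode =
  fixes G G' V :: "real \<Rightarrow> real"
  assumes Gd: "\<And>p. (G has_real_derivative G' p) (at p)"
    and G'c: "continuous_on UNIV G'"
    and Vc: "continuous_on {0..1} V"
begin

lemma Gcont: "continuous_on S G"
  by (meson DERIV_isCont Gd continuous_at_imp_continuous_on)

lemma G_isCont: "isCont G x"
  using DERIV_isCont Gd by blast

lemma G_lip: "\<exists>L>0. \<forall>x\<in>{A..B}. \<forall>y\<in>{A..B}. \<bar>G x - G y\<bar> \<le> L * \<bar>x - y\<bar>"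
proof -
  have "compact (G' ` {A..B})"
    by (rule compact_continuous_image) (auto intro: continuous_on_subset[OF G'c])
  then obtain M where M: "\<And>p. p \<in> {A..B} \<Longrightarrow> \<bar>G' p\<bar> \<le> M"
    using bound_img by blast
  define L where "L = \<bar>M\<bar> + 1"
  have key: "\<bar>G x - G y\<bar> \<le> L * \<bar>x - y\<bar>" if "x \<in> {A..B}" "y \<in> {A..B}" "x < y" for x y
  proof -
    obtain z where z: "x < z" "z < y" "G y - G x = (y - x) * G' z"
      using MVT2[OF \<open>x < y\<close>, of G G'] Gd by blast
    have "z \<in> {A..B}" using that z by auto
    then have "\<bar>G' z\<bar> \<le> L" using M[of z] unfolding L_def by auto
    then have "\<bar>(y - x) * G' z\<bar> \<le> L * \<bar>x - y\<bar>"
      using that by (auto simp: abs_mult mult.commute intro!: mult_right_mono)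
    then show ?thesis using z by (simp add: abs_minus_commute)
  qed
  have "\<forall>x\<in>{A..B}. \<forall>y\<in>{A..B}. \<bar>G x - G y\<bar> \<le> L * \<bar>x - y\<bar>"
  proof (intro ballI)
    fix x y assume "x \<in> {A..B}" "y \<in> {A..B}"
    then show "\<bar>G x - G y\<bar> \<le> L * \<bar>x - y\<bar>"
      using key[of x y] key[of y x]
      by (cases x y rule: linorder_cases) (auto simp: abs_minus_commute)
  qed
  then show ?thesis unfolding L_def by (intro exI[of _ "\<bar>M\<bar> + 1"]) auto
qed

lemma V_bound: "\<exists>M. \<forall>x\<in>{0..1}. \<bar>V x\<bar> \<le> M"
proof -
  have "compact (V ` {0..1})" by (rule compact_continuous_image[OF Vc]) auto
  then show ?thesis by (rule bound_img)
qed

lemma G_bound: "\<exists>M. \<forall>x\<in>{A..B}. \<bar>G x\<bar> \<le> M"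
proof -
  have "compact (G ` {A..B})" by (rule compact_continuous_image[OF Gcont]) auto
  then show ?thesis by (rule bound_img)
qed

definition sol :: "real \<Rightarrow> (real \<Rightarrow> real) \<Rightarrow> bool" where
  "sol k u \<longleftrightarrow> (\<forall>x\<in>{0..1}. (u has_real_derivative (k - G (u x) - V x)) (at x within {0..1}))"

definition psol :: "real \<Rightarrow> (real \<Rightarrow> real) \<Rightarrow> bool" where
  "psol k u \<longleftrightarrow> sol k u \<and> u 0 = u 1"

definition lower :: "real \<Rightarrow> (real \<Rightarrow> real) \<Rightarrow> bool" where
  "lower k a \<longleftrightarrow> (\<exists>a'. \<forall>x\<in>{0..1}. (a has_real_derivative a' x) (at x within {0..1}) \<and> a' x \<le> k - G (a x) - V x)"

definition upper :: "real \<Rightarrow> (real \<Rightarrow> real) \<Rightarrow> bool" where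
  "upper k a \<longleftrightarrow> (\<exists>a'. \<forall>x\<in>{0..1}. (a has_real_derivative a' x) (at x within {0..1}) \<and> a' x \<ge> k - G (a x) - V x)"

lemma sol_cont: "sol k u \<Longrightarrow> continuous_on {0..1} u"
  unfolding sol_def by (rule DERIV_continuous_on) auto

lemma lower_cont: "lower k u \<Longrightarrow> continuous_on {0..1} u"
  unfolding lower_def by (metis DERIV_continuous_on)

lemma upper_cont: "upper k u \<Longrightarrow> continuous_on {0..1} u"
  unfolding upper_def by (metis DERIV_continuous_on)

lemma sol_lower: "sol k u \<Longrightarrow> k \<le> k' \<Longrightarrow> lower k' u"
  unfolding sol_def lower_def by (intro exI[of _ "\<lambda>x. k - G (u x) - V x"]) auto

lemma sol_upper: "sol k u \<Longrightarrow> k' \<le> k \<Longrightarrow> upper k' u"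
  unfolding sol_def upper_def by (intro exI[of _ "\<lambda>x. k - G (u x) - V x"]) auto

end

context ode begin

definition Nf :: "real \<Rightarrow> real \<Rightarrow> (real \<Rightarrow> real) \<Rightarrow> real \<Rightarrow> real" where
  "Nf k lam u t = exp (lam * t) * (k - G (u t) - V t + lam * u t)"

definition Pint :: "real \<Rightarrow> real \<Rightarrow> (real \<Rightarrow> real) \<Rightarrow> real \<Rightarrow> real" where
  "Pint k lam u x = integral {0..x} (Nf k lam u)"

definition Top :: "real \<Rightarrow> real \<Rightarrow> real \<Rightarrow> real \<Rightarrow> (real \<Rightarrow> real) \<Rightarrow> real \<Rightarrow> real" where
  "Top k lam c1 c2 u x = exp (-(lam * x)) * (c1 + c2 * Pint k lam u 1 + Pint k lam u x)"

lemma comp_G_cont: "continuous_on S u \<Longrightarrow> continuous_on S (\<lambda>t. G (u t))"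
  using continuous_on_compose[of S u G] Gcont by (simp add: o_def)

lemma Nf_cont: "continuous_on {0..1} u \<Longrightarrow> continuous_on {0..1} (Nf k lam u)"
  unfolding Nf_def by (intro continuous_intros comp_G_cont Vc) auto

lemma Pint_deriv:
  assumes "continuous_on {0..1} u" "x \<in> {0..1}"
  shows "(Pint k lam u has_real_derivative Nf k lam u x) (at x within {0..1})"
  unfolding Pint_def[abs_def] by (rule integral_has_real_derivative[OF Nf_cont[OF assms(1)] assms(2)])

lemma Pint0: "Pint k lam u 0 = 0"
  unfolding Pint_def by simp

lemma Top_deriv:
  assumes "continuous_on {0..1} u" "x \<in> {0..1}"
  shows "(Top k lam c1 c2 u has_real_derivative
           (- lam * Top k lam c1 c2 u x + (k - G (u x) - V x + lam * u x))) (at x within {0..1})"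
proof -
  have d1: "((\<lambda>x. exp (-(lam * x))) has_real_derivative (- lam * exp (-(lam * x)))) (at x within {0..1})"
    by (auto intro!: derivative_eq_intros)
  have d2: "((\<lambda>x. c1 + c2 * Pint k lam u 1 + Pint k lam u x) has_real_derivative Nf k lam u x) (at x within {0..1})"
    by (auto intro!: derivative_eq_intros Pint_deriv assms)
  have "(Top k lam c1 c2 u has_real_derivative
     (- lam * exp (-(lam * x))) * (c1 + c2 * Pint k lam u 1 + Pint k lam u x) + Nf k lam u x * exp (-(lam * x))) (at x within {0..1})"
    unfolding Top_def[abs_def] by (rule DERIV_mult[OF d1 d2])
  then show ?thesis
    by (rule DERIV_cong) (simp add: Top_def Nf_def exp_minus field_simps)
qed

lemma Top_cont: "continuous_on {0..1} u \<Longrightarrow> continuous_on {0..1} (Top k lam c1 c2 u)"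
  by (rule DERIV_continuous_on[OF Top_deriv]) auto

lemma fix_sol:
  assumes "continuous_on {0..1} u" "\<forall>x\<in>{0..1}. u x = Top k lam c1 c2 u x"
  shows "sol k u"
  unfolding sol_def
proof
  fix x :: real assume x: "x \<in> {0..1}"
  have "(Top k lam c1 c2 u has_real_derivative (- lam * Top k lam c1 c2 u x + (k - G (u x) - V x + lam * u x))) (at x within {0..1})"
    by (rule Top_deriv[OF assms(1) x])
  then have "(u has_real_derivative (- lam * Top k lam c1 c2 u x + (k - G (u x) - V x + lam * u x))) (at x within {0..1})"
    by (rule has_field_derivative_transform_within[where d=1]) (use x assms(2) in auto)
  then show "(u has_real_derivative k - G (u x) - V x) (at x within {0..1})"
    by (rule DERIV_cong) (use x assms(2) in auto)
qed

lemma Top_mono: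
  assumes uc: "continuous_on {0..1} u" and vc: "continuous_on {0..1} v" and c2: "c2 \<ge> 0"
    and uv: "\<forall>t\<in>{0..1}. A \<le> u t \<and> u t \<le> v t \<and> v t \<le> B"
    and mono: "\<And>x y. A \<le> x \<Longrightarrow> x \<le> y \<Longrightarrow> y \<le> B \<Longrightarrow> G y - G x \<le> lam * (y - x)"
    and x: "x \<in> {0..1}"
  shows "Top k lam c1 c2 u x \<le> Top k lam c1 c2 v x"
proof -
  have le: "Nf k lam u t \<le> Nf k lam v t" if "t \<in> {0..1}" for t
  proof -
    have "G (v t) - G (u t) \<le> lam * (v t - u t)" using mono uv that by auto
    then show ?thesis unfolding Nf_def by (intro mult_left_mono) (auto simp: algebra_simps)
  qed
  have P: "Pint k lam u y \<le> Pint k lam v y" if "y \<in> {0..1}" for y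
    unfolding Pint_def
  proof (rule integral_le)
    show "Nf k lam u integrable_on {0..y}"
      by (rule integrable_continuous_interval, rule continuous_on_subset[OF Nf_cont[OF uc]]) (use that in auto)
    show "Nf k lam v integrable_on {0..y}"
      by (rule integrable_continuous_interval, rule continuous_on_subset[OF Nf_cont[OF vc]]) (use that in auto)
    show "Nf k lam u t \<le> Nf k lam v t" if "t \<in> {0..y}" for t using le[of t] that \<open>y \<in> {0..1}\<close> by auto
  qed
  have "c2 * Pint k lam u 1 \<le> c2 * Pint k lam v 1" using P[of 1] c2 by (intro mult_left_mono) auto
  then show ?thesis unfolding Top_def using P[OF x] by (intro mult_left_mono) auto
qed

lemma MI:
  assumes lam: "lam > 0" and c2: "c2 \<ge> 0"
    and ac: "continuous_on {0..1} \<alpha>" and bc: "continuous_on {0..1} \<beta>"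
    and ab: "\<forall>x\<in>{0..1}. \<alpha> x \<le> \<beta> x"
    and AB: "\<forall>x\<in>{0..1}. A \<le> \<alpha> x \<and> \<beta> x \<le> B"
    and mono: "\<And>x y. A \<le> x \<Longrightarrow> x \<le> y \<Longrightarrow> y \<le> B \<Longrightarrow> G y - G x \<le> lam * (y - x)"
    and Ta: "\<forall>x\<in>{0..1}. \<alpha> x \<le> Top k lam c1 c2 \<alpha> x"
    and Tb: "\<forall>x\<in>{0..1}. Top k lam c1 c2 \<beta> x \<le> \<beta> x"
  shows "\<exists>u. continuous_on {0..1} u \<and> (\<forall>x\<in>{0..1}. \<alpha> x \<le> u x \<and> u x \<le> \<beta> x \<and> u x = Top k lam c1 c2 u x)"
proof -
  define T where "T = Top k lam c1 c2"
  define s where "s n = (T ^^ n) \<alpha>" for n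
  have sS: "s (Suc n) = T (s n)" for n by (simp add: s_def)
  have s0: "s 0 = \<alpha>" by (simp add: s_def)
  have inv: "continuous_on {0..1} (s n) \<and> (\<forall>x\<in>{0..1}. \<alpha> x \<le> s n x \<and> s n x \<le> \<beta> x)" for n
  proof (induction n)
    case 0 then show ?case using ac ab s0 by auto
  next
    case (Suc n)
    have c: "continuous_on {0..1} (s (Suc n))" unfolding sS T_def by (rule Top_cont) (use Suc in auto)
    have "\<alpha> x \<le> s (Suc n) x \<and> s (Suc n) x \<le> \<beta> x" if x: "x \<in> {0..1}" for x
    proof
      have "T \<alpha> x \<le> T (s n) x" unfolding T_def
        by (rule Top_mono[OF ac _ c2 _ mono x]) (use Suc ab AB in \<open>auto intro: order_trans\<close>)
      then show "\<alpha> x \<le> s (Suc n) x" using Ta x unfolding sS T_def by (meson order_trans)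
      have "T (s n) x \<le> T \<beta> x" unfolding T_def
        by (rule Top_mono[OF _ bc c2 _ mono x]) (use Suc ab AB in \<open>auto intro: order_trans\<close>)
      then show "s (Suc n) x \<le> \<beta> x" using Tb x unfolding sS T_def by (meson order_trans)
    qed
    then show ?case using c by auto
  qed
  have sAB0: "A \<le> s n t \<and> s n t \<le> B" if "t \<in> {0..1}" for n t
    using inv[of n] AB that by (meson order_trans)
  have incr: "\<forall>x\<in>{0..1}. s n x \<le> s (Suc n) x" for n
  proof (induction n)
    case 0 then show ?case using Ta s0 sS T_def by auto
  next
    case (Suc n)
    show ?case
    proof
      fix x :: real assume x: "x \<in> {0..1}"
      have "T (s n) x \<le> T (s (Suc n)) x" unfolding T_def
        by (rule Top_mono[OF _ _ c2 _ mono x]) (use inv Suc sAB0 in auto)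
      then show "s (Suc n) x \<le> s (Suc (Suc n)) x" by (simp add: sS)
    qed
  qed
  define u where "u x = (SUP n. s n x)" for x
  have lim: "(\<lambda>n. s n x) \<longlonglongrightarrow> u x" if x: "x \<in> {0..1}" for x
    unfolding u_def
  proof (rule LIMSEQ_incseq_SUP)
    show "bdd_above (range (\<lambda>n. s n x))" using inv x by (auto intro!: bdd_aboveI[of _ "\<beta> x"])
    show "incseq (\<lambda>n. s n x)" using incr x by (auto intro!: incseq_SucI)
  qed
  have ub: "\<alpha> x \<le> u x \<and> u x \<le> \<beta> x" if x: "x \<in> {0..1}" for x
  proof
    show "\<alpha> x \<le> u x" by (rule LIMSEQ_le_const[OF lim[OF x]]) (use inv x in auto)
    show "u x \<le> \<beta> x" by (rule LIMSEQ_le_const2[OF lim[OF x]]) (use inv x in auto)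
  qed
  obtain GM where GM: "\<forall>y\<in>{A..B}. \<bar>G y\<bar> \<le> GM" using G_bound by blast
  obtain VM where VM: "\<forall>y\<in>{0..1}. \<bar>V y\<bar> \<le> VM" using V_bound by blast
  define K where "K = exp lam * (\<bar>k\<bar> + GM + VM + lam * (\<bar>A\<bar> + \<bar>B\<bar>))"
  have bnd: "\<bar>Nf k lam w t\<bar> \<le> K" if t: "t \<in> {0..1}" and w: "A \<le> w t" "w t \<le> B" for w t
  proof -
    have g: "\<bar>G (w t)\<bar> \<le> GM" using GM w by auto
    have v: "\<bar>V t\<bar> \<le> VM" using VM t by auto
    have ww: "\<bar>w t\<bar> \<le> \<bar>A\<bar> + \<bar>B\<bar>"
      unfolding abs_le_iff using w abs_ge_self[of A] abs_ge_minus_self[of A] abs_ge_self[of B] abs_ge_minus_self[of B]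
        abs_ge_zero[of A] abs_ge_zero[of B] by linarith
    have l: "\<bar>lam * w t\<bar> \<le> lam * (\<bar>A\<bar> + \<bar>B\<bar>)"
      using mult_left_mono[OF ww, of lam] lam by (simp add: abs_mult)
    have h: "\<bar>k - G (w t) - V t + lam * w t\<bar> \<le> \<bar>k\<bar> + GM + VM + lam * (\<bar>A\<bar> + \<bar>B\<bar>)"
      using g v l abs_triangle_ineq[of "k - G (w t) - V t" "lam * w t"]
        abs_triangle_ineq4[of "k - G (w t)" "V t"] abs_triangle_ineq4[of k "G (w t)"] by linarith
    have e: "exp (lam * t) \<le> exp lam" using t lam by auto
    have "\<bar>Nf k lam w t\<bar> = exp (lam * t) * \<bar>k - G (w t) - V t + lam * w t\<bar>"
      unfolding Nf_def by (simp add: abs_mult)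
    also have "\<dots> \<le> exp lam * (\<bar>k\<bar> + GM + VM + lam * (\<bar>A\<bar> + \<bar>B\<bar>))"
      by (rule mult_mono[OF e h]) auto
    finally show ?thesis unfolding K_def .
  qed
  have sAB: "A \<le> s n t \<and> s n t \<le> B" if "t \<in> {0..1}" for n t
    using inv[of n] AB that by (meson order_trans)
  have uAB: "A \<le> u t \<and> u t \<le> B" if "t \<in> {0..1}" for t
    using ub AB that by (meson order_trans)
  have conv: "\<And>x. x \<in> {0..1} \<Longrightarrow> (Nf k lam u integrable_on {0..x}) \<and> (\<lambda>n. Pint k lam (s n) x) \<longlonglongrightarrow> Pint k lam u x"
  proof -
    fix x :: real assume x: "x \<in> {0..1}"
    have p1: "Nf k lam (s n) integrable_on {0..x}" for n
      by (rule integrable_continuous_interval, rule continuous_on_subset[OF Nf_cont]) (use inv x in auto)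
    have p2: "(\<lambda>_. K) integrable_on {0..x}" by (rule integrable_const_ivl)
    have p3: "norm (Nf k lam (s n) t) \<le> K" if "t \<in> {0..x}" for n t
      using bnd[of t "s n"] sAB[of t n] that x by auto
    have p4: "(\<lambda>n. Nf k lam (s n) t) \<longlonglongrightarrow> Nf k lam u t" if "t \<in> {0..x}" for t
    proof -
      have t: "t \<in> {0..1}" using that x by auto
      have "(\<lambda>n. G (s n t)) \<longlonglongrightarrow> G (u t)" by (rule isCont_tendsto_compose[OF G_isCont lim[OF t]])
      then show ?thesis unfolding Nf_def by (intro tendsto_intros lim[OF t])
    qed
    have dc: "Nf k lam u integrable_on {0..x} \<and> (\<lambda>n. integral {0..x} (Nf k lam (s n))) \<longlonglongrightarrow> integral {0..x} (Nf k lam u)"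
      using dominated_convergence[OF p1 p2 p3 p4] by auto
    then show "(Nf k lam u integrable_on {0..x}) \<and> (\<lambda>n. Pint k lam (s n) x) \<longlonglongrightarrow> Pint k lam u x"
      unfolding Pint_def by auto
  qed
  have fixp: "u x = T u x" if x: "x \<in> {0..1}" for x
  proof -
    have "(\<lambda>n. T (s n) x) \<longlonglongrightarrow> T u x" unfolding T_def Top_def
      using conv[of 1] conv[OF x] by (intro tendsto_intros) auto
    moreover have "(\<lambda>n. T (s n) x) \<longlonglongrightarrow> u x"
      using lim[OF x] unfolding sS[symmetric] by (rule LIMSEQ_Suc)
    ultimately show ?thesis using LIMSEQ_unique by blast
  qed
  have "continuous_on {0..1} (Pint k lam u)"
    unfolding Pint_def[abs_def] by (rule indefinite_integral_continuous_1) (use conv[of 1] in auto)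
  then have "continuous_on {0..1} (T u)" unfolding T_def Top_def by (intro continuous_intros)
  then have "continuous_on {0..1} u" by (rule continuous_on_eq) (use fixp in auto)
  then show ?thesis using ub fixp unfolding T_def by blast
qed

lemma z_eq: "exp (lam * x) * (Top k lam c1 c2 a x - a x) = c1 + c2 * Pint k lam a 1 + Pint k lam a x - exp (lam * x) * a x"
  by (simp add: Top_def exp_minus field_simps)

lemma z_deriv:
  assumes ac: "continuous_on {0..1} a" and d: "(a has_real_derivative a' x) (at x within {0..1})" and x: "x \<in> {0..1}"
  shows "((\<lambda>x. exp (lam * x) * (Top k lam c1 c2 a x - a x)) has_real_derivative
            exp (lam * x) * (k - G (a x) - V x - a' x)) (at x within {0..1})"
  unfolding z_eq
  by (rule derivative_eq_intros Pint_deriv[OF ac x] d refl | simp)+ (simp add: Nf_def algebra_simps)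

lemma Top_1_per:
  assumes "lam > 0"
  shows "Top k lam 0 (1 / (exp lam - 1)) a 1 = Pint k lam a 1 / (exp lam - 1)"
proof -
  have "exp lam > 1" using assms by auto
  then show ?thesis unfolding Top_def by (simp add: exp_minus field_simps)
qed

lemma Top_0: "Top k lam c1 c2 a 0 = c1 + c2 * Pint k lam a 1"
  by (simp add: Top_def Pint0)

end

context ode begin

lemma lam_setup:
  fixes \<alpha> \<beta> :: "real \<Rightarrow> real"
  assumes ac: "continuous_on {0..1} \<alpha>" and bc: "continuous_on {0..1} \<beta>"
  shows "\<exists>A B lam. lam > 0 \<and> (\<forall>x\<in>{0..1}. A \<le> \<alpha> x \<and> \<beta> x \<le> B) \<and>
           (\<forall>x y. A \<le> x \<longrightarrow> x \<le> y \<longrightarrow> y \<le> B \<longrightarrow> G y - G x \<le> lam * (y - x))"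
proof -
  obtain xa where xa: "xa \<in> {0..1}" "\<forall>y\<in>{0..1}. \<alpha> xa \<le> \<alpha> y"
    using continuous_attains_inf[of "{0..1::real}" \<alpha>] ac by auto
  obtain xb where xb: "xb \<in> {0..1}" "\<forall>y\<in>{0..1}. \<beta> y \<le> \<beta> xb"
    using continuous_attains_sup[of "{0..1::real}" \<beta>] bc by auto
  obtain L where L: "L > 0" "\<forall>x\<in>{\<alpha> xa..\<beta> xb}. \<forall>y\<in>{\<alpha> xa..\<beta> xb}. \<bar>G x - G y\<bar> \<le> L * \<bar>x - y\<bar>"
    using G_lip by blast
  have "G y - G x \<le> L * (y - x)" if "\<alpha> xa \<le> x" "x \<le> y" "y \<le> \<beta> xb" for x y
    using L(2) that by (smt (verit, ccfv_SIG) atLeastAtMost_iff)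
  then show ?thesis using L xa xb by blast
qed

lemma lower_Top_per:
  assumes lam: "lam > 0" and lo: "lower k a" and a01: "a 0 \<le> a 1"
  shows "\<forall>x\<in>{0..1}. a x \<le> Top k lam 0 (1 / (exp lam - 1)) a x"
proof -
  obtain a' where a': "\<forall>x\<in>{0..1}. (a has_real_derivative a' x) (at x within {0..1}) \<and> a' x \<le> k - G (a x) - V x"
    using lo unfolding lower_def by blast
  have ac: "continuous_on {0..1} a" by (rule lower_cont[OF lo])
  define T where "T = Top k lam 0 (1 / (exp lam - 1)) a"
  define z where "z x = exp (lam * x) * (T x - a x)" for x
  define C where "C = Pint k lam a 1 / (exp lam - 1)"
  have zmono: "z x \<le> z y" if "0 \<le> x" "x \<le> y" "y \<le> 1" for x y
  proof (rule deriv_nonneg_mono[where f=z and a=0 and b=1])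
    fix t :: real assume t: "t \<in> {0..1}"
    show "(z has_real_derivative exp (lam * t) * (k - G (a t) - V t - a' t)) (at t within {0..1})"
      unfolding z_def[abs_def] T_def by (rule z_deriv[OF ac _ t]) (use a' t in auto)
    show "0 \<le> exp (lam * t) * (k - G (a t) - V t - a' t)" using a' t by auto
  qed (use that in auto)
  have e1: "exp lam > 1" using lam by auto
  have T0: "T 0 = C" unfolding T_def C_def by (simp add: Top_0)
  have T1: "T 1 = C" unfolding T_def C_def by (rule Top_1_per[OF lam])
  have z0: "z 0 = C - a 0" unfolding z_def using T0 by simp
  have z1: "z 1 = exp lam * (C - a 1)" unfolding z_def using T1 by simp
  have "C \<ge> a 1"
  proof (rule ccontr)
    assume "\<not> C \<ge> a 1"
    then have "(exp lam - 1) * (C - a 1) < 0" using e1 by (intro mult_pos_neg) auto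
    moreover have "exp lam * (C - a 1) = (exp lam - 1) * (C - a 1) + (C - a 1)" by algebra
    ultimately have "z 1 < z 0" using z0 z1 a01 by linarith
    then show False using zmono[of 0 1] by auto
  qed
  then have "z 0 \<ge> 0" using z0 a01 by linarith
  show ?thesis
  proof
    fix x :: real assume x: "x \<in> {0..1}"
    have "z x \<ge> 0" using zmono[of 0 x] x \<open>z 0 \<ge> 0\<close> by auto
    then have "T x - a x \<ge> 0" unfolding z_def by (simp add: zero_le_mult_iff)
    then show "a x \<le> Top k lam 0 (1 / (exp lam - 1)) a x" unfolding T_def by simp
  qed
qed

lemma upper_Top_per:
  assumes lam: "lam > 0" and up: "upper k a" and a01: "a 1 \<le> a 0"
  shows "\<forall>x\<in>{0..1}. Top k lam 0 (1 / (exp lam - 1)) a x \<le> a x"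
proof -
  obtain a' where a': "\<forall>x\<in>{0..1}. (a has_real_derivative a' x) (at x within {0..1}) \<and> a' x \<ge> k - G (a x) - V x"
    using up unfolding upper_def by blast
  have ac: "continuous_on {0..1} a" by (rule upper_cont[OF up])
  define T where "T = Top k lam 0 (1 / (exp lam - 1)) a"
  define z where "z x = - (exp (lam * x) * (T x - a x))" for x
  define C where "C = Pint k lam a 1 / (exp lam - 1)"
  have zmono: "z x \<le> z y" if "0 \<le> x" "x \<le> y" "y \<le> 1" for x y
  proof (rule deriv_nonneg_mono[where f=z and a=0 and b=1])
    fix t :: real assume t: "t \<in> {0..1}"
    show "(z has_real_derivative - (exp (lam * t) * (k - G (a t) - V t - a' t))) (at t within {0..1})"
      unfolding z_def[abs_def] T_def by (rule DERIV_minus, rule z_deriv[OF ac _ t]) (use a' t in auto)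
    show "0 \<le> - (exp (lam * t) * (k - G (a t) - V t - a' t))" using a' t
      by (simp add: mult_nonneg_nonpos)
  qed (use that in auto)
  have e1: "exp lam > 1" using lam by auto
  have T0: "T 0 = C" unfolding T_def C_def by (simp add: Top_0)
  have T1: "T 1 = C" unfolding T_def C_def by (rule Top_1_per[OF lam])
  have z0: "z 0 = - (C - a 0)" unfolding z_def using T0 by simp
  have z1: "z 1 = - (exp lam * (C - a 1))" unfolding z_def using T1 by simp
  have "C \<le> a 1"
  proof (rule ccontr)
    assume "\<not> C \<le> a 1"
    then have "(exp lam - 1) * (C - a 1) > 0" using e1 by (intro mult_pos_pos) auto
    moreover have "exp lam * (C - a 1) = (exp lam - 1) * (C - a 1) + (C - a 1)" by algebra
    ultimately have "z 1 < z 0" using z0 z1 a01 by linarith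
    then show False using zmono[of 0 1] by auto
  qed
  then have "z 0 \<ge> 0" using z0 a01 by linarith
  show ?thesis
  proof
    fix x :: real assume x: "x \<in> {0..1}"
    have "z x \<ge> 0" using zmono[of 0 x] x \<open>z 0 \<ge> 0\<close> by auto
    then have "T x - a x \<le> 0" unfolding z_def by (simp add: mult_le_0_iff)
    then show "Top k lam 0 (1 / (exp lam - 1)) a x \<le> a x" unfolding T_def by simp
  qed
qed

lemma lower_Top_ivp:
  assumes lo: "lower k a" and y: "a 0 \<le> y"
  shows "\<forall>x\<in>{0..1}. a x \<le> Top k lam y 0 a x"
proof -
  obtain a' where a': "\<forall>x\<in>{0..1}. (a has_real_derivative a' x) (at x within {0..1}) \<and> a' x \<le> k - G (a x) - V x"
    using lo unfolding lower_def by blast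
  have ac: "continuous_on {0..1} a" by (rule lower_cont[OF lo])
  define z where "z x = exp (lam * x) * (Top k lam y 0 a x - a x)" for x
  have zmono: "z x \<le> z y" if "0 \<le> x" "x \<le> y" "y \<le> 1" for x y
  proof (rule deriv_nonneg_mono[where f=z and a=0 and b=1])
    fix t :: real assume t: "t \<in> {0..1}"
    show "(z has_real_derivative exp (lam * t) * (k - G (a t) - V t - a' t)) (at t within {0..1})"
      unfolding z_def[abs_def] by (rule z_deriv[OF ac _ t]) (use a' t in auto)
    show "0 \<le> exp (lam * t) * (k - G (a t) - V t - a' t)" using a' t by auto
  qed (use that in auto)
  have "z 0 \<ge> 0" unfolding z_def using y by (simp add: Top_0)
  show ?thesis
  proof
    fix x :: real assume x: "x \<in> {0..1}"
    have "z x \<ge> 0" using zmono[of 0 x] x \<open>z 0 \<ge> 0\<close> by auto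
    then show "a x \<le> Top k lam y 0 a x" unfolding z_def by (simp add: zero_le_mult_iff)
  qed
qed

lemma upper_Top_ivp:
  assumes up: "upper k a" and y: "y \<le> a 0"
  shows "\<forall>x\<in>{0..1}. Top k lam y 0 a x \<le> a x"
proof -
  obtain a' where a': "\<forall>x\<in>{0..1}. (a has_real_derivative a' x) (at x within {0..1}) \<and> a' x \<ge> k - G (a x) - V x"
    using up unfolding upper_def by blast
  have ac: "continuous_on {0..1} a" by (rule upper_cont[OF up])
  define z where "z x = - (exp (lam * x) * (Top k lam y 0 a x - a x))" for x
  have zmono: "z x \<le> z y" if "0 \<le> x" "x \<le> y" "y \<le> 1" for x y
  proof (rule deriv_nonneg_mono[where f=z and a=0 and b=1])
    fix t :: real assume t: "t \<in> {0..1}"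
    show "(z has_real_derivative - (exp (lam * t) * (k - G (a t) - V t - a' t))) (at t within {0..1})"
      unfolding z_def[abs_def] by (rule DERIV_minus, rule z_deriv[OF ac _ t]) (use a' t in auto)
    show "0 \<le> - (exp (lam * t) * (k - G (a t) - V t - a' t))" using a' t
      by (simp add: mult_nonneg_nonpos)
  qed (use that in auto)
  have "z 0 \<ge> 0" unfolding z_def using y by (simp add: Top_0)
  show ?thesis
  proof
    fix x :: real assume x: "x \<in> {0..1}"
    have "z x \<ge> 0" using zmono[of 0 x] x \<open>z 0 \<ge> 0\<close> by auto
    then show "Top k lam y 0 a x \<le> a x" unfolding z_def by (simp add: mult_le_0_iff)
  qed
qed

theorem subsuper:
  assumes lo: "lower k \<alpha>" and a01: "\<alpha> 0 \<le> \<alpha> 1" and up: "upper k \<beta>" and b01: "\<beta> 1 \<le> \<beta> 0"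
    and ab: "\<forall>x\<in>{0..1}. \<alpha> x \<le> \<beta> x"
  shows "\<exists>u. psol k u \<and> (\<forall>x\<in>{0..1}. \<alpha> x \<le> u x \<and> u x \<le> \<beta> x)"
proof -
  have ac: "continuous_on {0..1} \<alpha>" by (rule lower_cont[OF lo])
  have bc: "continuous_on {0..1} \<beta>" by (rule upper_cont[OF up])
  obtain A B lam where lam: "lam > 0" and AB: "\<forall>x\<in>{0..1}. A \<le> \<alpha> x \<and> \<beta> x \<le> B"
    and mono: "\<And>x y. A \<le> x \<Longrightarrow> x \<le> y \<Longrightarrow> y \<le> B \<Longrightarrow> G y - G x \<le> lam * (y - x)"
    using lam_setup[OF ac bc] by blast
  have c2: "1 / (exp lam - 1) \<ge> 0" using lam by auto
  obtain u where u: "continuous_on {0..1} u"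
    "\<forall>x\<in>{0..1}. \<alpha> x \<le> u x \<and> u x \<le> \<beta> x \<and> u x = Top k lam 0 (1 / (exp lam - 1)) u x"
    using MI[OF lam c2 ac bc ab AB mono lower_Top_per[OF lam lo a01] upper_Top_per[OF lam up b01]] by blast
  have "sol k u" by (rule fix_sol[OF u(1)]) (use u(2) in auto)
  moreover have "u 0 = u 1"
  proof -
    have "u 0 = Top k lam 0 (1 / (exp lam - 1)) u 0" using u(2) by auto
    also have "\<dots> = Pint k lam u 1 / (exp lam - 1)" by (simp add: Top_0)
    also have "\<dots> = Top k lam 0 (1 / (exp lam - 1)) u 1" by (rule Top_1_per[OF lam, symmetric])
    also have "\<dots> = u 1" using u(2) by auto
    finally show ?thesis .
  qed
  ultimately show ?thesis unfolding psol_def using u by blast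
qed

theorem ivp:
  assumes lo: "lower k \<alpha>" and up: "upper k \<beta>" and ab: "\<forall>x\<in>{0..1}. \<alpha> x \<le> \<beta> x"
    and y: "\<alpha> 0 \<le> y" "y \<le> \<beta> 0"
  shows "\<exists>u. sol k u \<and> u 0 = y \<and> (\<forall>x\<in>{0..1}. \<alpha> x \<le> u x \<and> u x \<le> \<beta> x)"
proof -
  have ac: "continuous_on {0..1} \<alpha>" by (rule lower_cont[OF lo])
  have bc: "continuous_on {0..1} \<beta>" by (rule upper_cont[OF up])
  obtain A B lam where lam: "lam > 0" and AB: "\<forall>x\<in>{0..1}. A \<le> \<alpha> x \<and> \<beta> x \<le> B"
    and mono: "\<And>x y. A \<le> x \<Longrightarrow> x \<le> y \<Longrightarrow> y \<le> B \<Longrightarrow> G y - G x \<le> lam * (y - x)"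
    using lam_setup[OF ac bc] by blast
  have c2: "(0::real) \<ge> 0" by simp
  obtain u where u: "continuous_on {0..1} u"
    "\<forall>x\<in>{0..1}. \<alpha> x \<le> u x \<and> u x \<le> \<beta> x \<and> u x = Top k lam y 0 u x"
    using MI[OF lam c2 ac bc ab AB mono lower_Top_ivp[OF lo y(1)] upper_Top_ivp[OF up y(2)]] by blast
  have "sol k u" by (rule fix_sol[OF u(1)]) (use u(2) in auto)
  moreover have "u 0 = y" using u(2) by (auto simp: Top_0)
  ultimately show ?thesis using u by blast
qed

end

lemma first_zero:
  fixes w :: "real \<Rightarrow> real"
  assumes wc: "continuous_on {a..b} w" and wa: "w a > 0" and wb: "w b \<le> 0" and ab: "a \<le> b"
  shows "\<exists>z. a < z \<and> z \<le> b \<and> w z = 0 \<and> (\<forall>t. a \<le> t \<and> t < z \<longrightarrow> w t > 0)"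
proof -
  define S where "S = {t \<in> {a..b}. w t \<le> 0}"
  have Sne: "S \<noteq> {}" using wb ab unfolding S_def by auto
  have Sbdd: "bdd_below S" unfolding S_def by (auto intro: bdd_belowI[of _ a])
  have Scl: "closed S"
  proof -
    have "closed ({a..b} \<inter> w -` {..0})"
      by (rule continuous_closed_preimage[OF wc]) auto
    moreover have "S = {a..b} \<inter> w -` {..0}" unfolding S_def by auto
    ultimately show ?thesis by simp
  qed
  define z where "z = Inf S"
  have zS: "z \<in> S" unfolding z_def by (rule closed_contains_Inf[OF Sne Sbdd Scl])
  have zle: "z \<le> t" if "t \<in> S" for t unfolding z_def by (rule cInf_lower[OF that Sbdd])
  have za: "a < z" using zS wa unfolding S_def by (cases "z = a") auto
  have pos: "w t > 0" if "a \<le> t" "t < z" for t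
  proof (rule ccontr)
    assume "\<not> w t > 0"
    then have "t \<in> S" using that zS unfolding S_def by auto
    then show False using zle[of t] that by auto
  qed
  have "w z = 0"
  proof (rule ccontr)
    assume "w z \<noteq> 0"
    then have wz: "w z < 0" using zS unfolding S_def by auto
    obtain t where t: "a \<le> t" "t \<le> z" "w t = 0"
      using IVT2'[of w z 0 a] wz wa za continuous_on_subset[OF wc, of "{a..z}"] zS unfolding S_def by auto
    have "t \<noteq> z" using t wz by auto
    then show False using pos[of t] t by auto
  qed
  then show ?thesis using za zS pos unfolding S_def by auto
qed

lemma nozero:
  fixes w w' :: "real \<Rightarrow> real"
  assumes d: "\<And>x. x \<in> {0..1} \<Longrightarrow> (w has_real_derivative w' x) (at x within {0..1})"
    and per: "w 0 = w 1"
    and zp: "\<And>x. x \<in> {0..1} \<Longrightarrow> w x = 0 \<Longrightarrow> w' x > 0"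
  shows "\<forall>x\<in>{0..1}. w x \<noteq> 0"
proof (rule ccontr)
  assume "\<not> (\<forall>x\<in>{0..1}. w x \<noteq> 0)"
  then obtain z0 where z0: "z0 \<in> {0..1}" "w z0 = 0" by auto
  have wc: "continuous_on {0..1} w" by (rule DERIV_continuous_on[OF d])
  have noleft: False if z: "z \<in> {0..1}" "w z = 0" "a < z" "0 \<le> a" "\<forall>t. a \<le> t \<and> t < z \<longrightarrow> w t > 0" for z a
  proof -
    obtain e where e: "e > 0" "\<forall>h>0. z - h \<in> {0..1} \<longrightarrow> h < e \<longrightarrow> w (z - h) < w z"
      using has_real_derivative_pos_inc_left[OF d[OF z(1)] zp[OF z(1,2)]] by blast
    define h where "h = min (e / 2) (z - a)"
    have h: "h > 0" "h < e" "z - h \<in> {0..1}" "a \<le> z - h" "z - h < z"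
      using e z unfolding h_def by (auto simp: min_def)
    then have "w (z - h) < 0" using e z by auto
    moreover have "w (z - h) > 0" using z(5) h by auto
    ultimately show False by auto
  qed
  obtain z1 where z1: "z1 \<in> {0..<1}" "w z1 = 0"
  proof (cases "z0 = 1")
    case True then show ?thesis using that[of 0] per z0 by auto
  next
    case False then show ?thesis using that[of z0] z0 by auto
  qed
  obtain e where e: "e > 0" "\<forall>h>0. z1 + h \<in> {0..1} \<longrightarrow> h < e \<longrightarrow> w z1 < w (z1 + h)"
  proof -
    have z1': "z1 \<in> {0..1}" using z1 by auto
    show ?thesis using has_real_derivative_pos_inc_right[OF d[OF z1'] zp[OF z1' z1(2)]] that by blast
  qed
  define a where "a = z1 + min (e / 2) (1 - z1)"
  have a: "z1 < a" "a \<le> 1" "w a > 0" using e z1 unfolding a_def by (auto simp: min_def)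
  have wca: "continuous_on {a..1} w" by (rule continuous_on_subset[OF wc]) (use a z1 in auto)
  show False
  proof (cases "w 1 \<le> 0")
    case True
    obtain z where z: "a < z" "z \<le> 1" "w z = 0" "\<forall>t. a \<le> t \<and> t < z \<longrightarrow> w t > 0"
      using first_zero[OF wca a(3) True a(2)] by auto
    show False by (rule noleft[of z a]) (use z a z1 in auto)
  next
    case False
    then have "w 0 > 0" using per by auto
    then have "z1 > 0" using z1 by (cases "z1 = 0") auto
    have wc0: "continuous_on {0..z1} w" by (rule continuous_on_subset[OF wc]) (use z1 in auto)
    obtain z where z: "0 < z" "z \<le> z1" "w z = 0" "\<forall>t. 0 \<le> t \<and> t < z \<longrightarrow> w t > 0"
      using first_zero[OF wc0 \<open>w 0 > 0\<close>] z1 by auto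
    show False by (rule noleft[of z 0]) (use z z1 in auto)
  qed
qed

lemma const_sign:
  fixes w :: "real \<Rightarrow> real"
  assumes wc: "continuous_on {0..1} w" and nz: "\<forall>x\<in>{0..1}. w x \<noteq> 0"
  shows "(\<forall>x\<in>{0..1}. w x > 0) \<or> (\<forall>x\<in>{0..1}. w x < 0)"
proof (rule ccontr)
  assume "\<not> ?thesis"
  then obtain p q where p: "p \<in> {0..1}" "w p \<le> 0" and q: "q \<in> {0..1}" "w q \<ge> 0" by auto
  have "w p \<noteq> 0" "w q \<noteq> 0" using nz p(1) q(1) by auto
  then have "w p < 0" "w q > 0" using p(2) q(2) by auto
  show False
  proof (cases "p \<le> q")
    case True
    obtain x where "p \<le> x" "x \<le> q" "w x = 0"
      using IVT'[of w p 0 q] \<open>w p < 0\<close> \<open>w q > 0\<close> True continuous_on_subset[OF wc, of "{p..q}"] p q by auto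
    then show False using nz p q by auto
  next
    case False
    obtain x where "q \<le> x" "x \<le> p" "w x = 0"
      using IVT2'[of w p 0 q] \<open>w p < 0\<close> \<open>w q > 0\<close> False continuous_on_subset[OF wc, of "{q..p}"] p q by auto
    then show False using nz p q by auto
  qed
qed

lemma integral_pos_cont:
  fixes w :: "real \<Rightarrow> real"
  assumes wc: "continuous_on {0..1} w" and pos: "\<forall>x\<in>{0..1}. w x > 0"
  shows "integral {0..1} w > 0"
proof -
  obtain xm where xm: "xm \<in> {0..1}" "\<forall>y\<in>{0..1}. w xm \<le> w y"
    using continuous_attains_inf[of "{0..1::real}" w] wc by auto
  have "integral {0..1::real} (\<lambda>_. w xm) \<le> integral {0..1} w"
  proof (rule Henstock_Kurzweil_Integration.integral_le)
    show "(\<lambda>_. w xm) integrable_on {0..1::real}" by (rule integrable_const_ivl)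
    show "w integrable_on {0..1}" by (rule integrable_continuous_interval[OF wc])
  qed (use xm in auto)
  moreover have "w xm > 0" using pos xm(1) by auto
  ultimately show ?thesis by simp
qed

lemma gronwall_zero:
  fixes w w' :: "real \<Rightarrow> real"
  assumes d: "\<And>x. x \<in> {0..1} \<Longrightarrow> (w has_real_derivative w' x) (at x within {0..1})"
    and L: "\<And>x. x \<in> {0..1} \<Longrightarrow> \<bar>w' x\<bar> \<le> L * \<bar>w x\<bar>"
    and x0: "x0 \<in> {0..1}" "w x0 = 0"
  shows "\<forall>x\<in>{0..1}. w x = 0"
proof
  fix x :: real assume x: "x \<in> {0..1}"
  have wc: "continuous_on {0..1} w" by (rule DERIV_continuous_on[OF d])
  have key: "\<bar>2 * w t * w' t\<bar> \<le> 2 * L * (w t)\<^sup>2" if "t \<in> {0..1}" for t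
  proof -
    have "\<bar>2 * w t * w' t\<bar> = 2 * \<bar>w t\<bar> * \<bar>w' t\<bar>" by (simp add: abs_mult)
    also have "\<dots> \<le> 2 * \<bar>w t\<bar> * (L * \<bar>w t\<bar>)" using L[OF that] by (intro mult_left_mono) auto
    also have "\<dots> = 2 * L * \<bar>w t\<bar>\<^sup>2" by (simp add: power2_eq_square mult_ac)
    also have "\<dots> = 2 * L * (w t)\<^sup>2" by simp
    finally show ?thesis .
  qed
  have dz: "((\<lambda>t. (w t)\<^sup>2) has_real_derivative 2 * w t * w' t) (at t within {0..1})" if "t \<in> {0..1}" for t
    unfolding power2_eq_square by (rule DERIV_cong[OF DERIV_mult[OF d[OF that] d[OF that]]]) simp
  show "w x = 0"
  proof (cases "x0 \<le> x")
    case True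
    define z where "z t = - (exp (- (2 * L * t)) * (w t)\<^sup>2)" for t
    have "z x0 \<le> z x"
    proof (rule deriv_nonneg_mono[where f=z and a=0 and b=1])
      fix t :: real assume t: "t \<in> {0..1}"
      have e: "((\<lambda>t. exp (- (2 * L * t))) has_real_derivative - 2 * L * exp (- (2 * L * t))) (at t within {0..1})"
        by (auto intro!: derivative_eq_intros)
      show "(z has_real_derivative - (- 2 * L * exp (- (2 * L * t)) * (w t)\<^sup>2 + exp (- (2 * L * t)) * (2 * w t * w' t))) (at t within {0..1})"
        unfolding z_def[abs_def] by (rule DERIV_minus, rule DERIV_cong[OF DERIV_mult[OF e dz[OF t]]]) simp
      have "2 * w t * w' t \<le> 2 * L * (w t)\<^sup>2" using key[OF t] by linarith
      then have "exp (- (2 * L * t)) * (2 * w t * w' t) \<le> exp (- (2 * L * t)) * (2 * L * (w t)\<^sup>2)"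
        by (intro mult_left_mono) auto
      then show "0 \<le> - (- 2 * L * exp (- (2 * L * t)) * (w t)\<^sup>2 + exp (- (2 * L * t)) * (2 * w t * w' t))"
        by (simp add: algebra_simps)
    qed (use x x0 True in auto)
    then have "exp (- (2 * L * x)) * (w x)\<^sup>2 \<le> 0" unfolding z_def using x0 by simp
    then have "(w x)\<^sup>2 \<le> 0" by (simp add: mult_le_0_iff)
    then show ?thesis by simp
  next
    case False
    define z where "z t = exp (2 * L * t) * (w t)\<^sup>2" for t
    have "z x \<le> z x0"
    proof (rule deriv_nonneg_mono[where f=z and a=0 and b=1])
      fix t :: real assume t: "t \<in> {0..1}"
      have e: "((\<lambda>t. exp (2 * L * t)) has_real_derivative 2 * L * exp (2 * L * t)) (at t within {0..1})"
        by (auto intro!: derivative_eq_intros)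
      show "(z has_real_derivative (2 * L * exp (2 * L * t) * (w t)\<^sup>2 + exp (2 * L * t) * (2 * w t * w' t))) (at t within {0..1})"
        unfolding z_def[abs_def] by (rule DERIV_cong[OF DERIV_mult[OF e dz[OF t]]]) simp
      have "- (2 * L * (w t)\<^sup>2) \<le> 2 * w t * w' t" using key[OF t] by linarith
      then have "exp (2 * L * t) * (- (2 * L * (w t)\<^sup>2)) \<le> exp (2 * L * t) * (2 * w t * w' t)"
        by (intro mult_left_mono) auto
      then show "0 \<le> 2 * L * exp (2 * L * t) * (w t)\<^sup>2 + exp (2 * L * t) * (2 * w t * w' t)"
        by (simp add: algebra_simps)
    qed (use x x0 False in auto)
    then have "exp (2 * L * x) * (w x)\<^sup>2 \<le> 0" unfolding z_def using x0 by simp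
    then have "(w x)\<^sup>2 \<le> 0" by (simp add: mult_le_0_iff)
    then show ?thesis by simp
  qed
qed

lemma refl_img: "(\<lambda>x. 1 - x) ` {0..1} = {0..1::real}"
proof
  show "(\<lambda>x. 1 - x) ` {0..1} \<subseteq> {0..1::real}" by auto
  show "{0..1::real} \<subseteq> (\<lambda>x. 1 - x) ` {0..1}"
  proof
    fix x :: real assume "x \<in> {0..1}"
    then show "x \<in> (\<lambda>x. 1 - x) ` {0..1}" by (intro image_eqI[of _ _ "1 - x"]) auto
  qed
qed

lemma refl_deriv:
  fixes u :: "real \<Rightarrow> real"
  assumes "(u has_real_derivative D) (at (1 - x) within {0..1})"
  shows "((\<lambda>x. u (1 - x)) has_real_derivative - D) (at x within {0..1})"
proof -
  have g: "((\<lambda>x. 1 - x) has_real_derivative -1) (at x within {0..1})"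
    by (auto intro!: derivative_eq_intros)
  have "(u \<circ> (\<lambda>x. 1 - x) has_real_derivative D * -1) (at x within {0..1})"
    by (rule DERIV_image_chain[OF _ g]) (use assms refl_img in simp)
  then show ?thesis by (simp add: o_def)
qed

lemma cont_bound:
  fixes u :: "real \<Rightarrow> real"
  assumes "continuous_on {0..1} u" shows "\<exists>M. \<forall>x\<in>{0..1}. \<bar>u x\<bar> \<le> M"
  by (rule bound_img, rule compact_continuous_image[OF assms]) auto

context ode begin

lemma sol_k_unique:
  assumes su: "sol k u" and sv: "sol k' v" and eq: "\<forall>x\<in>{0..1}. u x = v x"
  shows "k = k'"
proof -
  define x0 :: real where "x0 = 1 / 2"
  have x0: "x0 \<in> {0..1}" unfolding x0_def by auto
  have at: "at x0 within {0..1} = at x0"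
    by (rule at_within_interior) (simp add: x0_def)
  have "(u has_real_derivative k - G (u x0) - V x0) (at x0 within {0..1})"
    using su x0 unfolding sol_def by blast
  then have du: "(u has_real_derivative k - G (u x0) - V x0) (at x0)" using at by simp
  have "(v has_real_derivative k' - G (v x0) - V x0) (at x0 within {0..1})"
    using sv x0 unfolding sol_def by auto
  then have "(u has_real_derivative k' - G (v x0) - V x0) (at x0 within {0..1})"
    by (rule has_field_derivative_transform_within[where d=1]) (use x0 eq in auto)
  then have dv: "(u has_real_derivative k' - G (v x0) - V x0) (at x0)" using at by simp
  have "k - G (u x0) - V x0 = k' - G (v x0) - V x0" by (rule DERIV_unique[OF du dv])
  then show ?thesis using eq x0 by auto
qed

lemma psol_cont: "psol k u \<Longrightarrow> continuous_on {0..1} u"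
  unfolding psol_def using sol_cont by blast

lemma order_lt:
  assumes p1: "psol k1 u1" and p2: "psol k2 u2" and k: "k1 < k2"
  shows "(\<forall>x\<in>{0..1}. u1 x < u2 x) \<or> (\<forall>x\<in>{0..1}. u2 x < u1 x)"
proof -
  define w where "w x = u2 x - u1 x" for x
  define w' where "w' x = (k2 - G (u2 x) - V x) - (k1 - G (u1 x) - V x)" for x
  have d: "(w has_real_derivative w' x) (at x within {0..1})" if "x \<in> {0..1}" for x
    unfolding w_def[abs_def] w'_def using p1 p2 that unfolding psol_def sol_def
    by (intro DERIV_diff) auto
  have per: "w 0 = w 1" using p1 p2 unfolding psol_def w_def by auto
  have zp: "w' x > 0" if "x \<in> {0..1}" "w x = 0" for x
    using that k unfolding w_def w'_def by auto
  have nz: "\<forall>x\<in>{0..1}. w x \<noteq> 0" by (rule nozero[OF d per zp])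
  have wc: "continuous_on {0..1} w" by (rule DERIV_continuous_on[OF d])
  from const_sign[OF wc nz] show ?thesis unfolding w_def by auto
qed

lemma order_eq_k:
  assumes p1: "psol k u1" and p2: "psol k u2"
  shows "(\<forall>x\<in>{0..1}. u1 x < u2 x) \<or> (\<forall>x\<in>{0..1}. u2 x < u1 x) \<or> (\<forall>x\<in>{0..1}. u1 x = u2 x)"
proof -
  define w where "w x = u2 x - u1 x" for x
  define w' where "w' x = (k - G (u2 x) - V x) - (k - G (u1 x) - V x)" for x
  have d: "(w has_real_derivative w' x) (at x within {0..1})" if "x \<in> {0..1}" for x
    unfolding w_def[abs_def] w'_def using p1 p2 that unfolding psol_def sol_def
    by (intro DERIV_diff) auto
  have wc: "continuous_on {0..1} w" by (rule DERIV_continuous_on[OF d])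
  obtain M1 where M1: "\<forall>x\<in>{0..1}. \<bar>u1 x\<bar> \<le> M1" using cont_bound[OF psol_cont[OF p1]] by blast
  obtain M2 where M2: "\<forall>x\<in>{0..1}. \<bar>u2 x\<bar> \<le> M2" using cont_bound[OF psol_cont[OF p2]] by blast
  define M where "M = max M1 M2"
  obtain L where L: "L > 0" "\<forall>x\<in>{-M..M}. \<forall>y\<in>{-M..M}. \<bar>G x - G y\<bar> \<le> L * \<bar>x - y\<bar>"
    using G_lip by blast
  have Lw: "\<bar>w' x\<bar> \<le> L * \<bar>w x\<bar>" if "x \<in> {0..1}" for x
  proof -
    have "\<bar>u1 x\<bar> \<le> M1" "\<bar>u2 x\<bar> \<le> M2" using M1 M2 that by auto
    then have "u1 x \<in> {-M..M}" "u2 x \<in> {-M..M}" unfolding M_def by (auto simp: abs_le_iff)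
    then have "\<bar>G (u1 x) - G (u2 x)\<bar> \<le> L * \<bar>u1 x - u2 x\<bar>" using L by blast
    then show ?thesis unfolding w_def w'_def by (simp add: abs_minus_commute)
  qed
  show ?thesis
  proof (cases "\<exists>x0\<in>{0..1}. w x0 = 0")
    case True
    then obtain x0 where "x0 \<in> {0..1}" "w x0 = 0" by blast
    from gronwall_zero[OF d Lw this] show ?thesis unfolding w_def by auto
  next
    case False
    then have "\<forall>x\<in>{0..1}. w x \<noteq> 0" by auto
    from const_sign[OF wc this] show ?thesis unfolding w_def by auto
  qed
qed

lemma order_psol:
  assumes p1: "psol k1 u1" and p2: "psol k2 u2"
  shows "(\<forall>x\<in>{0..1}. u1 x < u2 x) \<or> (\<forall>x\<in>{0..1}. u2 x < u1 x) \<or> (\<forall>x\<in>{0..1}. u1 x = u2 x)"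
proof (cases k1 k2 rule: linorder_cases)
  case less then show ?thesis using order_lt[OF p1 p2] by blast
next
  case equal then show ?thesis using order_eq_k[OF p1] p2 by blast
next
  case greater then show ?thesis using order_lt[OF p2 p1] by blast
qed

lemma psol_lt_mean:
  assumes p1: "psol k1 u1" and p2: "psol k2 u2" and lt: "\<forall>x\<in>{0..1}. u1 x < u2 x"
  shows "integral {0..1} u1 < integral {0..1} u2"
proof -
  have c1: "continuous_on {0..1} u1" by (rule psol_cont[OF p1])
  have c2: "continuous_on {0..1} u2" by (rule psol_cont[OF p2])
  have "integral {0..1} (\<lambda>x. u2 x - u1 x) > 0"
    by (rule integral_pos_cont) (use lt in \<open>auto intro!: continuous_intros c1 c2\<close>)
  moreover have "integral {0..1} (\<lambda>x. u2 x - u1 x) = integral {0..1} u2 - integral {0..1} u1"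
    by (rule integral_diff) (auto intro: integrable_continuous_interval c1 c2)
  ultimately show ?thesis by simp
qed

lemma psol_mean_lt_imp:
  assumes p1: "psol k1 u1" and p2: "psol k2 u2" and lt: "integral {0..1} u1 < integral {0..1} u2"
  shows "\<forall>x\<in>{0..1}. u1 x < u2 x"
proof -
  have "\<not> (\<forall>x\<in>{0..1}. u2 x < u1 x)" using psol_lt_mean[OF p2 p1] lt by auto
  moreover have "\<not> (\<forall>x\<in>{0..1}. u1 x = u2 x)"
  proof
    assume "\<forall>x\<in>{0..1}. u1 x = u2 x"
    then have "integral {0..1} u1 = integral {0..1} u2" by (intro integral_cong) auto
    then show False using lt by simp
  qed
  ultimately show ?thesis using order_psol[OF p1 p2] by blast
qed

lemma psol_mean_eq_imp:
  assumes p1: "psol k1 u1" and p2: "psol k2 u2" and eq: "integral {0..1} u1 = integral {0..1} u2"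
  shows "(\<forall>x\<in>{0..1}. u1 x = u2 x) \<and> k1 = k2"
proof -
  have "\<not> (\<forall>x\<in>{0..1}. u2 x < u1 x)" using psol_lt_mean[OF p2 p1] eq by auto
  moreover have "\<not> (\<forall>x\<in>{0..1}. u1 x < u2 x)" using psol_lt_mean[OF p1 p2] eq by auto
  ultimately have e: "\<forall>x\<in>{0..1}. u1 x = u2 x" using order_psol[OF p1 p2] by blast
  then have "k1 = k2" using sol_k_unique p1 p2 unfolding psol_def by blast
  with e show ?thesis by blast
qed

lemma psol_le_strict:
  assumes p1: "psol k1 u1" and p2: "psol k2 u2" and le: "\<forall>x\<in>{0..1}. u1 x \<le> u2 x" and ne: "\<exists>x\<in>{0..1}. u1 x \<noteq> u2 x"
  shows "\<forall>x\<in>{0..1}. u1 x < u2 x"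
proof -
  have "\<not> (\<forall>x\<in>{0..1}. u2 x < u1 x)"
  proof
    assume "\<forall>x\<in>{0..1}. u2 x < u1 x"
    then have "u2 0 < u1 0" by auto
    moreover have "u1 0 \<le> u2 0" using le by auto
    ultimately show False by simp
  qed
  moreover have "\<not> (\<forall>x\<in>{0..1}. u1 x = u2 x)" using ne by auto
  ultimately show ?thesis using order_psol[OF p1 p2] by blast
qed

lemma ode_T: "ode (\<lambda>p. - G p) (\<lambda>p. - G' p) (\<lambda>x. - V (1 - x))"
proof
  show "((\<lambda>p. - G p) has_real_derivative - G' p) (at p)" for p by (rule DERIV_minus[OF Gd])
  show "continuous_on UNIV (\<lambda>p. - G' p)" by (intro continuous_intros G'c)
  show "continuous_on {0..1} (\<lambda>x. - V (1 - x))"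
    by (intro continuous_intros, rule continuous_on_compose2[OF Vc]) (auto intro!: continuous_intros)
qed

lemma ode_R: "ode (\<lambda>p. G (- p)) (\<lambda>p. - G' (- p)) (\<lambda>x. V (1 - x))"
proof
  show "((\<lambda>p. G (- p)) has_real_derivative - G' (- p)) (at p)" for p
  proof -
    have "((\<lambda>p. G (- p)) has_real_derivative G' (- p) * -1) (at p)"
      by (rule DERIV_chain2[OF Gd]) (auto intro!: derivative_eq_intros)
    then show ?thesis by simp
  qed
  show "continuous_on UNIV (\<lambda>p. - G' (- p))"
    by (intro continuous_intros continuous_on_compose2[OF G'c]) auto
  show "continuous_on {0..1} (\<lambda>x. V (1 - x))"
    by (rule continuous_on_compose2[OF Vc]) (auto intro!: continuous_intros)
qed

lemma sol_T: "sol k u \<Longrightarrow> ode.sol (\<lambda>p. - G p) (\<lambda>x. - V (1 - x)) (- k) (\<lambda>x. u (1 - x))"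
  unfolding ode.sol_def[OF ode_T] sol_def
proof
  fix x :: real assume s: "\<forall>x\<in>{0..1}. (u has_real_derivative k - G (u x) - V x) (at x within {0..1})" and x: "x \<in> {0..1}"
  have "(u has_real_derivative k - G (u (1 - x)) - V (1 - x)) (at (1 - x) within {0..1})" using s x by auto
  from refl_deriv[OF this] show "((\<lambda>x. u (1 - x)) has_real_derivative - k - - G (u (1 - x)) - - V (1 - x)) (at x within {0..1})"
    by (rule DERIV_cong) simp
qed

lemma psol_T: "psol k u \<Longrightarrow> ode.psol (\<lambda>p. - G p) (\<lambda>x. - V (1 - x)) (- k) (\<lambda>x. u (1 - x))"
  unfolding ode.psol_def[OF ode_T] psol_def using sol_T by auto

lemma lower_T: "lower k a \<Longrightarrow> ode.upper (\<lambda>p. - G p) (\<lambda>x. - V (1 - x)) (- k) (\<lambda>x. a (1 - x))"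
  unfolding ode.upper_def[OF ode_T] lower_def
proof (elim exE)
  fix a' assume s: "\<forall>x\<in>{0..1}. (a has_real_derivative a' x) (at x within {0..1}) \<and> a' x \<le> k - G (a x) - V x"
  show "\<exists>b'. \<forall>x\<in>{0..1}. ((\<lambda>x. a (1 - x)) has_real_derivative b' x) (at x within {0..1}) \<and> - k - - G (a (1 - x)) - - V (1 - x) \<le> b' x"
  proof (intro exI[of _ "\<lambda>x. - a' (1 - x)"] ballI conjI)
    fix x :: real assume x: "x \<in> {0..1}"
    show "((\<lambda>x. a (1 - x)) has_real_derivative - a' (1 - x)) (at x within {0..1})"
      by (rule refl_deriv) (use s x in auto)
    have "1 - x \<in> {0..1}" using x by auto
    then have "a' (1 - x) \<le> k - G (a (1 - x)) - V (1 - x)" using s by blast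
    then show "- k - - G (a (1 - x)) - - V (1 - x) \<le> - a' (1 - x)" by simp
  qed
qed

lemma upper_T: "upper k a \<Longrightarrow> ode.lower (\<lambda>p. - G p) (\<lambda>x. - V (1 - x)) (- k) (\<lambda>x. a (1 - x))"
  unfolding ode.lower_def[OF ode_T] upper_def
proof (elim exE)
  fix a' assume s: "\<forall>x\<in>{0..1}. (a has_real_derivative a' x) (at x within {0..1}) \<and> a' x \<ge> k - G (a x) - V x"
  show "\<exists>b'. \<forall>x\<in>{0..1}. ((\<lambda>x. a (1 - x)) has_real_derivative b' x) (at x within {0..1}) \<and> b' x \<le> - k - - G (a (1 - x)) - - V (1 - x)"
  proof (intro exI[of _ "\<lambda>x. - a' (1 - x)"] ballI conjI)
    fix x :: real assume x: "x \<in> {0..1}"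
    show "((\<lambda>x. a (1 - x)) has_real_derivative - a' (1 - x)) (at x within {0..1})"
      by (rule refl_deriv) (use s x in auto)
    have "1 - x \<in> {0..1}" using x by auto
    then have "a' (1 - x) \<ge> k - G (a (1 - x)) - V (1 - x)" using s by blast
    then show "- a' (1 - x) \<le> - k - - G (a (1 - x)) - - V (1 - x)" by simp
  qed
qed

lemma sol_R: "sol k u \<Longrightarrow> ode.sol (\<lambda>p. G (- p)) (\<lambda>x. V (1 - x)) k (\<lambda>x. - u (1 - x))"
  unfolding ode.sol_def[OF ode_R] sol_def
proof
  fix x :: real assume s: "\<forall>x\<in>{0..1}. (u has_real_derivative k - G (u x) - V x) (at x within {0..1})" and x: "x \<in> {0..1}"
  have "(u has_real_derivative k - G (u (1 - x)) - V (1 - x)) (at (1 - x) within {0..1})" using s x by auto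
  from DERIV_minus[OF refl_deriv[OF this]] show "((\<lambda>x. - u (1 - x)) has_real_derivative k - G (- (- u (1 - x))) - V (1 - x)) (at x within {0..1})"
    by (rule DERIV_cong) simp
qed

lemma psol_R: "psol k u \<Longrightarrow> ode.psol (\<lambda>p. G (- p)) (\<lambda>x. V (1 - x)) k (\<lambda>x. - u (1 - x))"
  unfolding ode.psol_def[OF ode_R] psol_def using sol_R by auto

lemma lower_R: "lower k a \<Longrightarrow> ode.lower (\<lambda>p. G (- p)) (\<lambda>x. V (1 - x)) k (\<lambda>x. - a (1 - x))"
  unfolding ode.lower_def[OF ode_R] lower_def
proof (elim exE)
  fix a' assume s: "\<forall>x\<in>{0..1}. (a has_real_derivative a' x) (at x within {0..1}) \<and> a' x \<le> k - G (a x) - V x"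
  show "\<exists>b'. \<forall>x\<in>{0..1}. ((\<lambda>x. - a (1 - x)) has_real_derivative b' x) (at x within {0..1}) \<and> b' x \<le> k - G (- (- a (1 - x))) - V (1 - x)"
  proof (intro exI[of _ "\<lambda>x. a' (1 - x)"] ballI conjI)
    fix x :: real assume x: "x \<in> {0..1}"
    have "((\<lambda>x. a (1 - x)) has_real_derivative - a' (1 - x)) (at x within {0..1})"
      by (rule refl_deriv) (use s x in auto)
    from DERIV_minus[OF this] show "((\<lambda>x. - a (1 - x)) has_real_derivative a' (1 - x)) (at x within {0..1})" by simp
    have "1 - x \<in> {0..1}" using x by auto
    then have "a' (1 - x) \<le> k - G (a (1 - x)) - V (1 - x)" using s by blast
    then show "a' (1 - x) \<le> k - G (- (- a (1 - x))) - V (1 - x)" by simp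
  qed
qed

lemma upper_R: "upper k a \<Longrightarrow> ode.upper (\<lambda>p. G (- p)) (\<lambda>x. V (1 - x)) k (\<lambda>x. - a (1 - x))"
  unfolding ode.upper_def[OF ode_R] upper_def
proof (elim exE)
  fix a' assume s: "\<forall>x\<in>{0..1}. (a has_real_derivative a' x) (at x within {0..1}) \<and> a' x \<ge> k - G (a x) - V x"
  show "\<exists>b'. \<forall>x\<in>{0..1}. ((\<lambda>x. - a (1 - x)) has_real_derivative b' x) (at x within {0..1}) \<and> k - G (- (- a (1 - x))) - V (1 - x) \<le> b' x"
  proof (intro exI[of _ "\<lambda>x. a' (1 - x)"] ballI conjI)
    fix x :: real assume x: "x \<in> {0..1}"
    have "((\<lambda>x. a (1 - x)) has_real_derivative - a' (1 - x)) (at x within {0..1})"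
      by (rule refl_deriv) (use s x in auto)
    from DERIV_minus[OF this] show "((\<lambda>x. - a (1 - x)) has_real_derivative a' (1 - x)) (at x within {0..1})" by simp
    have "1 - x \<in> {0..1}" using x by auto
    then have "a' (1 - x) \<ge> k - G (a (1 - x)) - V (1 - x)" using s by blast
    then show "k - G (- (- a (1 - x))) - V (1 - x) \<le> a' (1 - x)" by simp
  qed
qed

end

lemma pos_propag:
  fixes d d' :: "real \<Rightarrow> real"
  assumes dd: "\<And>x. x \<in> {0..1} \<Longrightarrow> (d has_real_derivative d' x) (at x within {0..1})"
    and lb: "\<And>x. x \<in> {0..1} \<Longrightarrow> d' x \<ge> - L * d x"
    and d0: "d 0 > 0"
  shows "\<forall>x\<in>{0..1}. d x > 0"
proof
  fix x :: real assume x: "x \<in> {0..1}"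
  define z where "z t = exp (L * t) * d t" for t
  have "z 0 \<le> z x"
  proof (rule deriv_nonneg_mono[where f=z and a=0 and b=1])
    fix t :: real assume t: "t \<in> {0..1}"
    have e: "((\<lambda>t. exp (L * t)) has_real_derivative L * exp (L * t)) (at t within {0..1})"
      by (auto intro!: derivative_eq_intros)
    show "(z has_real_derivative L * exp (L * t) * d t + d' t * exp (L * t)) (at t within {0..1})"
      unfolding z_def[abs_def] by (rule DERIV_mult[OF e dd[OF t]])
    have "L * exp (L * t) * d t + d' t * exp (L * t) = exp (L * t) * (d' t + L * d t)" by (simp add: algebra_simps)
    moreover have "d' t + L * d t \<ge> 0" using lb[OF t] by simp
    ultimately show "0 \<le> L * exp (L * t) * d t + d' t * exp (L * t)" by simp
  qed (use x in auto)
  then have "exp (L * x) * d x > 0" unfolding z_def using d0 by simp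
  then show "d x > 0" by (simp add: zero_less_mult_iff)
qed

context ode begin

theorem subsuper_rev:
  assumes lo: "lower k \<alpha>" and a01: "\<alpha> 0 \<le> \<alpha> 1" and up: "upper k \<beta>" and b01: "\<beta> 1 \<le> \<beta> 0"
    and ba: "\<forall>x\<in>{0..1}. \<beta> x \<le> \<alpha> x"
  shows "\<exists>u. psol k u \<and> (\<forall>x\<in>{0..1}. \<beta> x \<le> u x \<and> u x \<le> \<alpha> x)"
proof -
  interpret T: ode "\<lambda>p. - G p" "\<lambda>p. - G' p" "\<lambda>x. - V (1 - x)" by (rule ode_T)
  have lo': "T.lower (- k) (\<lambda>x. \<beta> (1 - x))" by (rule upper_T[OF up])
  have up': "T.upper (- k) (\<lambda>x. \<alpha> (1 - x))" by (rule lower_T[OF lo])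
  have le: "\<forall>x\<in>{0..1}. \<beta> (1 - x) \<le> \<alpha> (1 - x)" using ba by auto
  obtain p where p: "T.psol (- k) p" "\<forall>x\<in>{0..1}. \<beta> (1 - x) \<le> p x \<and> p x \<le> \<alpha> (1 - x)"
    using T.subsuper[OF lo' _ up' _ le] a01 b01 by auto
  have "psol k (\<lambda>x. p (1 - x))" using T.psol_T[OF p(1)] by simp
  moreover have "\<forall>x\<in>{0..1}. \<beta> x \<le> p (1 - x) \<and> p (1 - x) \<le> \<alpha> x"
  proof
    fix x :: real assume "x \<in> {0..1}"
    then have "1 - x \<in> {0..1}" by auto
    then show "\<beta> x \<le> p (1 - x) \<and> p (1 - x) \<le> \<alpha> x" using p(2) by fastforce
  qed
  ultimately show ?thesis by blast
qed

lemma cont_bound2: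
  fixes f1 f2 :: "real \<Rightarrow> real"
  assumes "continuous_on {0..1} f1" "continuous_on {0..1} f2"
  shows "\<exists>M. \<forall>x\<in>{0..1}. \<bar>f1 x\<bar> \<le> M \<and> \<bar>f2 x\<bar> \<le> M"
proof -
  obtain M1 where "\<forall>x\<in>{0..1}. \<bar>f1 x\<bar> \<le> M1" using cont_bound[OF assms(1)] by blast
  moreover obtain M2 where "\<forall>x\<in>{0..1}. \<bar>f2 x\<bar> \<le> M2" using cont_bound[OF assms(2)] by blast
  ultimately show ?thesis by (intro exI[of _ "max M1 M2"]) auto
qed

lemma gap_core:
  assumes p1: "psol k f1" and p2: "psol k f2" and su: "sol k u"
    and btw: "\<forall>x\<in>{0..1}. f1 x < u x \<and> u x < f2 x" and u01: "u 0 < u 1"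
  shows "\<exists>k' p. psol k' p \<and> (\<forall>x\<in>{0..1}. f1 x \<le> p x \<and> p x \<le> f2 x) \<and> (\<exists>x\<in>{0..1}. p x \<noteq> f1 x) \<and> (\<exists>x\<in>{0..1}. p x \<noteq> f2 x)"
proof -
  have c1: "continuous_on {0..1} f1" by (rule psol_cont[OF p1])
  have c2: "continuous_on {0..1} f2" by (rule psol_cont[OF p2])
  have cu: "continuous_on {0..1} u" by (rule sol_cont[OF su])
  obtain M where M: "\<forall>x\<in>{0..1}. \<bar>f1 x\<bar> \<le> M \<and> \<bar>f2 x\<bar> \<le> M" using cont_bound2[OF c1 c2] by blast
  obtain L where L: "L > 0" "\<forall>x\<in>{-M..M}. \<forall>y\<in>{-M..M}. \<bar>G x - G y\<bar> \<le> L * \<bar>x - y\<bar>"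
    using G_lip by blast
  have cd: "continuous_on {0..1} (\<lambda>x. u x - f1 x)" by (intro continuous_intros cu c1)
  obtain xm where xm: "xm \<in> {0..1}" "\<forall>y\<in>{0..1}. u xm - f1 xm \<le> u y - f1 y"
    using continuous_attains_inf[of "{0..1::real}" "\<lambda>x. u x - f1 x"] cd by auto
  define \<delta> where "\<delta> = min (u xm - f1 xm) (u 1 - u 0)"
  have \<delta>: "\<delta> > 0" using btw xm u01 unfolding \<delta>_def by auto
  have eL: "exp L - 1 > 0" using L by auto
  define c where "c = \<delta> / (2 * (exp L - 1))"
  have c: "c > 0" unfolding c_def using \<delta> eL by auto
  have cbound: "c * (exp L - 1) < \<delta>" unfolding c_def using \<delta> eL by (simp add: field_simps)
  define \<epsilon> where "\<epsilon> = c * L"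
  have \<epsilon>: "\<epsilon> > 0" unfolding \<epsilon>_def using c L by auto
  define ut where "ut x = u x - c * (exp (L * x) - 1)" for x
  have ex1: "exp (L * x) - 1 \<ge> 0" if "x \<in> {0..1}" for x using that L by auto
  have exL: "exp (L * x) - 1 \<le> exp L - 1" if "x \<in> {0..1}" for x using that L by auto
  have ut_gt: "f1 x < ut x" if x: "x \<in> {0..1}" for x
  proof -
    have "u xm - f1 xm \<le> u x - f1 x" using xm x by auto
    moreover have "c * (exp (L * x) - 1) \<le> c * (exp L - 1)" using exL[OF x] c by (intro mult_left_mono) auto
    ultimately show ?thesis unfolding ut_def using cbound \<delta>_def by linarith
  qed
  have ut_le: "ut x \<le> u x" if x: "x \<in> {0..1}" for x
    unfolding ut_def using ex1[OF x] c by simp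
  have ut01: "ut 0 \<le> ut 1" unfolding ut_def using cbound \<delta>_def by simp
  have lo: "lower (k - \<epsilon>) ut"
    unfolding lower_def
  proof (intro exI[of _ "\<lambda>x. (k - G (u x) - V x) - c * (L * exp (L * x))"] ballI conjI)
    fix x :: real assume x: "x \<in> {0..1}"
    have du: "(u has_real_derivative k - G (u x) - V x) (at x within {0..1})" using su x unfolding sol_def by auto
    have e: "((\<lambda>x. c * (exp (L * x) - 1)) has_real_derivative c * (L * exp (L * x))) (at x within {0..1})"
      by (auto intro!: derivative_eq_intros)
    show "(ut has_real_derivative (k - G (u x) - V x) - c * (L * exp (L * x))) (at x within {0..1})"
      unfolding ut_def[abs_def] by (rule DERIV_diff[OF du e])
    have bx: "f1 x < u x" "u x < f2 x" "\<bar>f1 x\<bar> \<le> M" "\<bar>f2 x\<bar> \<le> M" using btw M x by auto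
    have r1: "u x \<in> {-M..M}" using bx by (auto simp: abs_le_iff)
    have r2: "ut x \<in> {-M..M}" using ut_gt[OF x] ut_le[OF x] bx by (auto simp: abs_le_iff)
    have "G (ut x) - G (u x) \<le> L * \<bar>ut x - u x\<bar>" using L(2) r1 r2 by fastforce
    also have "\<dots> = L * (c * (exp (L * x) - 1))" unfolding ut_def using ex1[OF x] c by simp
    finally show "(k - G (u x) - V x) - c * (L * exp (L * x)) \<le> (k - \<epsilon>) - G (ut x) - V x"
      unfolding \<epsilon>_def by (simp add: algebra_simps)
  qed
  have up: "upper (k - \<epsilon>) f2" using p2 \<epsilon> unfolding psol_def by (intro sol_upper) auto
  have le: "\<forall>x\<in>{0..1}. ut x \<le> f2 x" using ut_le btw by fastforce
  obtain p where p: "psol (k - \<epsilon>) p" "\<forall>x\<in>{0..1}. ut x \<le> p x \<and> p x \<le> f2 x"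
    using subsuper[OF lo ut01 up _ le] p2 unfolding psol_def by auto
  have a: "\<forall>x\<in>{0..1}. f1 x \<le> p x \<and> p x \<le> f2 x" using p(2) ut_gt by fastforce
  have "f1 0 < ut 0" "ut 0 \<le> p 0" using p(2) ut_gt[of 0] by auto
  then have b: "\<exists>x\<in>{0..1}. p x \<noteq> f1 x" by (intro bexI[of _ 0]) auto
  have c': "\<exists>x\<in>{0..1}. p x \<noteq> f2 x"
  proof (rule ccontr)
    assume "\<not> ?thesis"
    then have "\<forall>x\<in>{0..1}. p x = f2 x" by auto
    then have "k - \<epsilon> = k" using sol_k_unique p(1) p2 unfolding psol_def by blast
    then show False using \<epsilon> by simp
  qed
  show ?thesis using p(1) a b c' by blast
qed

end

context ode begin

lemma sol_strict:
  assumes p1: "sol k f1" and su: "sol k u" and le: "\<forall>x\<in>{0..1}. f1 x \<le> u x" and s0: "f1 0 < u 0"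
    and M: "\<forall>x\<in>{0..1}. \<bar>f1 x\<bar> \<le> M \<and> \<bar>u x\<bar> \<le> M"
  shows "\<forall>x\<in>{0..1}. f1 x < u x"
proof -
  obtain L where L: "L > 0" "\<forall>x\<in>{-M..M}. \<forall>y\<in>{-M..M}. \<bar>G x - G y\<bar> \<le> L * \<bar>x - y\<bar>"
    using G_lip by blast
  define d where "d x = u x - f1 x" for x
  define d' where "d' x = (k - G (u x) - V x) - (k - G (f1 x) - V x)" for x
  have dd: "(d has_real_derivative d' x) (at x within {0..1})" if "x \<in> {0..1}" for x
    unfolding d_def[abs_def] d'_def using p1 su that unfolding sol_def by (intro DERIV_diff) auto
  have lb: "d' x \<ge> - L * d x" if x: "x \<in> {0..1}" for x
  proof -
    have "\<bar>u x\<bar> \<le> M" "\<bar>f1 x\<bar> \<le> M" using M x by auto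
    then have "u x \<in> {-M..M}" "f1 x \<in> {-M..M}" by (auto simp: abs_le_iff)
    then have "\<bar>G (u x) - G (f1 x)\<bar> \<le> L * \<bar>u x - f1 x\<bar>" using L by blast
    moreover have "\<bar>u x - f1 x\<bar> = u x - f1 x" using le x by auto
    ultimately show ?thesis unfolding d_def d'_def by (simp add: abs_le_iff)
  qed
  have "\<forall>x\<in>{0..1}. d x > 0" by (rule pos_propag[OF dd lb]) (use s0 d_def in auto)
  then show ?thesis unfolding d_def by auto
qed

lemma gap_eq:
  assumes p1: "psol k f1" and p2: "psol k f2" and lt: "\<forall>x\<in>{0..1}. f1 x < f2 x"
  shows "\<exists>k' p. psol k' p \<and> (\<forall>x\<in>{0..1}. f1 x \<le> p x \<and> p x \<le> f2 x) \<and> (\<exists>x\<in>{0..1}. p x \<noteq> f1 x) \<and> (\<exists>x\<in>{0..1}. p x \<noteq> f2 x)"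
proof -
  have s1: "sol k f1" and s2: "sol k f2" using p1 p2 unfolding psol_def by auto
  define y where "y = (f1 0 + f2 0) / 2"
  have y: "f1 0 < y" "y < f2 0" using lt unfolding y_def by auto
  have lo: "lower k f1" by (rule sol_lower[OF s1]) simp
  have up: "upper k f2" by (rule sol_upper[OF s2]) simp
  have ab: "\<forall>x\<in>{0..1}. f1 x \<le> f2 x" using lt by (simp add: less_imp_le)
  obtain u where u: "sol k u" "u 0 = y" "\<forall>x\<in>{0..1}. f1 x \<le> u x \<and> u x \<le> f2 x"
    using ivp[OF lo up ab less_imp_le[OF y(1)] less_imp_le[OF y(2)]] by blast
  obtain M where M: "\<forall>x\<in>{0..1}. \<bar>f1 x\<bar> \<le> M \<and> \<bar>f2 x\<bar> \<le> M"
    using cont_bound2[OF psol_cont[OF p1] psol_cont[OF p2]] by blast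
  have Mu: "\<forall>x\<in>{0..1}. \<bar>u x\<bar> \<le> M"
  proof
    fix x :: real assume x: "x \<in> {0..1}"
    then have "f1 x \<le> u x" "u x \<le> f2 x" "\<bar>f1 x\<bar> \<le> M" "\<bar>f2 x\<bar> \<le> M" using u M by auto
    then show "\<bar>u x\<bar> \<le> M" by (auto simp: abs_le_iff)
  qed
  have a1: "\<forall>x\<in>{0..1}. f1 x < u x"
    by (rule sol_strict[OF s1 u(1)]) (use u y M Mu in auto)
  have a2: "\<forall>x\<in>{0..1}. u x < f2 x"
    by (rule sol_strict[OF u(1) s2]) (use u y M Mu in auto)
  have btw: "\<forall>x\<in>{0..1}. f1 x < u x \<and> u x < f2 x" using a1 a2 by auto
  consider "u 0 = u 1" | "u 0 < u 1" | "u 1 < u 0" by linarith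
  then show ?thesis
  proof cases
    case 1
    then have "psol k u" using u unfolding psol_def by auto
    moreover have "f1 0 < u 0" "u 0 < f2 0" using btw by auto
    then have "\<exists>x\<in>{0..1}. u x \<noteq> f1 x" "\<exists>x\<in>{0..1}. u x \<noteq> f2 x"
      by (auto intro!: bexI[of _ 0])
    ultimately show ?thesis using btw by (meson less_imp_le)
  next
    case 2
    show ?thesis by (rule gap_core[OF p1 p2 u(1) btw 2])
  next
    case 3
    interpret T: ode "\<lambda>p. - G p" "\<lambda>p. - G' p" "\<lambda>x. - V (1 - x)" by (rule ode_T)
    have btw': "\<forall>x\<in>{0..1}. f1 (1 - x) < u (1 - x) \<and> u (1 - x) < f2 (1 - x)"
    proof
      fix x :: real assume "x \<in> {0..1}" then have "1 - x \<in> {0..1}" by auto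
      then show "f1 (1 - x) < u (1 - x) \<and> u (1 - x) < f2 (1 - x)" using btw by blast
    qed
    obtain k' p where p: "T.psol k' p" "\<forall>x\<in>{0..1}. f1 (1 - x) \<le> p x \<and> p x \<le> f2 (1 - x)"
      "\<exists>x\<in>{0..1}. p x \<noteq> f1 (1 - x)" "\<exists>x\<in>{0..1}. p x \<noteq> f2 (1 - x)"
      using T.gap_core[OF psol_T[OF p1] psol_T[OF p2] sol_T[OF u(1)] btw'] 3 by auto
    have pp: "psol (- k') (\<lambda>x. p (1 - x))" using T.psol_T[OF p(1)] by simp
    have r: "\<forall>x\<in>{0..1}. f1 x \<le> p (1 - x) \<and> p (1 - x) \<le> f2 x"
    proof
      fix x :: real assume "x \<in> {0..1}" then have "1 - x \<in> {0..1}" by auto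
      then show "f1 x \<le> p (1 - x) \<and> p (1 - x) \<le> f2 x" using p(2) by fastforce
    qed
    obtain x1 where x1: "x1 \<in> {0..1}" "p x1 \<noteq> f1 (1 - x1)" using p(3) by auto
    obtain x2 where x2: "x2 \<in> {0..1}" "p x2 \<noteq> f2 (1 - x2)" using p(4) by auto
    have "\<exists>x\<in>{0..1}. p (1 - x) \<noteq> f1 x" using x1 by (intro bexI[of _ "1 - x1"]) auto
    moreover have "\<exists>x\<in>{0..1}. p (1 - x) \<noteq> f2 x" using x2 by (intro bexI[of _ "1 - x2"]) auto
    ultimately show ?thesis using pp r by blast
  qed
qed

lemma gap:
  assumes p1: "psol k1 f1" and p2: "psol k2 f2" and lt: "\<forall>x\<in>{0..1}. f1 x < f2 x"
  shows "\<exists>k p. psol k p \<and> (\<forall>x\<in>{0..1}. f1 x \<le> p x \<and> p x \<le> f2 x) \<and> (\<exists>x\<in>{0..1}. p x \<noteq> f1 x) \<and> (\<exists>x\<in>{0..1}. p x \<noteq> f2 x)"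
proof (cases k1 k2 rule: linorder_cases)
  case equal
  then show ?thesis using gap_eq[OF p1 _ lt] p2 by blast
next
  case less
  define k where "k = (k1 + k2) / 2"
  have s1: "sol k1 f1" and s2: "sol k2 f2" using p1 p2 unfolding psol_def by auto
  have lo: "lower k f1" by (rule sol_lower[OF s1]) (use less k_def in auto)
  have up: "upper k f2" by (rule sol_upper[OF s2]) (use less k_def in auto)
  have e1: "f1 0 \<le> f1 1" "f2 1 \<le> f2 0" using p1 p2 unfolding psol_def by auto
  have ab: "\<forall>x\<in>{0..1}. f1 x \<le> f2 x" using lt by (simp add: less_imp_le)
  obtain p where p: "psol k p" "\<forall>x\<in>{0..1}. f1 x \<le> p x \<and> p x \<le> f2 x"
    using subsuper[OF lo e1(1) up e1(2) ab] by blast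
  have n1: "\<exists>x\<in>{0..1}. p x \<noteq> f1 x"
  proof (rule ccontr)
    assume "\<not> ?thesis" then have "\<forall>x\<in>{0..1}. p x = f1 x" by auto
    then have "k = k1" using sol_k_unique p(1) s1 unfolding psol_def by blast
    then show False using less k_def by auto
  qed
  have n2: "\<exists>x\<in>{0..1}. p x \<noteq> f2 x"
  proof (rule ccontr)
    assume "\<not> ?thesis" then have "\<forall>x\<in>{0..1}. p x = f2 x" by auto
    then have "k = k2" using sol_k_unique p(1) s2 unfolding psol_def by blast
    then show False using less k_def by auto
  qed
  show ?thesis using p n1 n2 by blast
next
  case greater
  define k where "k = (k1 + k2) / 2"
  have s1: "sol k1 f1" and s2: "sol k2 f2" using p1 p2 unfolding psol_def by auto
  have up: "upper k f1" by (rule sol_upper[OF s1]) (use greater k_def in auto)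
  have lo: "lower k f2" by (rule sol_lower[OF s2]) (use greater k_def in auto)
  have e1: "f2 0 \<le> f2 1" "f1 1 \<le> f1 0" using p1 p2 unfolding psol_def by auto
  have ab: "\<forall>x\<in>{0..1}. f1 x \<le> f2 x" using lt by (simp add: less_imp_le)
  obtain p where p: "psol k p" "\<forall>x\<in>{0..1}. f1 x \<le> p x \<and> p x \<le> f2 x"
    using subsuper_rev[OF lo e1(1) up e1(2) ab] by blast
  have n1: "\<exists>x\<in>{0..1}. p x \<noteq> f1 x"
  proof (rule ccontr)
    assume "\<not> ?thesis" then have "\<forall>x\<in>{0..1}. p x = f1 x" by auto
    then have "k = k1" using sol_k_unique p(1) s1 unfolding psol_def by blast
    then show False using greater k_def by auto
  qed
  have n2: "\<exists>x\<in>{0..1}. p x \<noteq> f2 x"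
  proof (rule ccontr)
    assume "\<not> ?thesis" then have "\<forall>x\<in>{0..1}. p x = f2 x" by auto
    then have "k = k2" using sol_k_unique p(1) s2 unfolding psol_def by blast
    then show False using greater k_def by auto
  qed
  show ?thesis using p n1 n2 by blast
qed

lemma gap_mean:
  assumes p1: "psol k1 f1" and p2: "psol k2 f2" and lt: "integral {0..1} f1 < integral {0..1} f2"
  shows "\<exists>k p. psol k p \<and> integral {0..1} f1 < integral {0..1} p \<and> integral {0..1} p < integral {0..1} f2"
proof -
  have "\<forall>x\<in>{0..1}. f1 x < f2 x" by (rule psol_mean_lt_imp[OF p1 p2 lt])
  then obtain k p where p: "psol k p" "\<forall>x\<in>{0..1}. f1 x \<le> p x \<and> p x \<le> f2 x"
    "\<exists>x\<in>{0..1}. p x \<noteq> f1 x" "\<exists>x\<in>{0..1}. p x \<noteq> f2 x"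
    using gap[OF p1 p2] by blast
  obtain x1 where x1: "x1 \<in> {0..1}" "p x1 \<noteq> f1 x1" using p(3) by blast
  have ne1: "\<exists>x\<in>{0..1}. f1 x \<noteq> p x" using x1 by (intro bexI[of _ x1]) auto
  have "\<forall>x\<in>{0..1}. f1 x < p x" by (rule psol_le_strict[OF p1 p(1) _ ne1]) (use p in auto)
  then have "integral {0..1} f1 < integral {0..1} p" by (rule psol_lt_mean[OF p1 p(1)])
  moreover have "\<forall>x\<in>{0..1}. p x < f2 x" by (rule psol_le_strict[OF p(1) p2 _ p(4)]) (use p in auto)
  then have "integral {0..1} p < integral {0..1} f2" by (rule psol_lt_mean[OF p(1) p2])
  ultimately show ?thesis using p(1) by blast
qed

end

lemma integral_refl01:
  fixes v :: "real \<Rightarrow> real"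
  shows "integral {0..1} (\<lambda>x. v (1 - x)) = integral {0..1} v"
proof -
  have "integral {0..1} (\<lambda>x. v (1 - x)) = integral {-0..-(-1)} (\<lambda>x. (\<lambda>y. v (1 + y)) (-x))" by simp
  also have "\<dots> = integral {-1..0} (\<lambda>y. v (1 + y))" by (rule Henstock_Kurzweil_Integration.integral_reflect_real)
  also have "\<dots> = integral {-1..0} (v \<circ> (+) 1)" by (simp add: o_def)
  also have "\<dots> = integral {-1+1..0+1} v" by (rule integral_shift_Icc_real)
  also have "\<dots> = integral {0..1} v" by simp
  finally show ?thesis .
qed

lemma mean_R:
  fixes v :: "real \<Rightarrow> real"
  assumes "continuous_on {0..1} v"
  shows "integral {0..1} (\<lambda>x. - v (1 - x)) = - integral {0..1} v"
proof -
  have "continuous_on {0..1} (\<lambda>x. v (1 - x))"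
    by (rule continuous_on_compose2[OF assms]) (auto intro!: continuous_intros)
  then have "(\<lambda>x. v (1 - x)) integrable_on {0..1}" by (rule integrable_continuous_interval)
  then show ?thesis using integral_refl01[of v] by (simp add: integral_neg)
qed

context ode begin

lemma sol_int:
  assumes su: "sol k u" and x: "x \<in> {0..1}"
  shows "((\<lambda>t. k - G (u t) - V t) has_integral (u x - u 0)) {0..x}"
proof (rule fundamental_theorem_of_calculus)
  show "0 \<le> x" using x by auto
  fix t assume t: "t \<in> {0..x}"
  then have t1: "t \<in> {0..1}" using x by auto
  have "(u has_real_derivative k - G (u t) - V t) (at t within {0..1})" using su t1 unfolding sol_def by auto
  then have "(u has_real_derivative k - G (u t) - V t) (at t within {0..x})"
    by (rule has_field_derivative_subset) (use x in auto)
  then show "(u has_vector_derivative k - G (u t) - V t) (at t within {0..x})"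
    by (simp add: has_real_derivative_iff_has_vector_derivative)
qed

lemma k_bound:
  assumes p: "psol k u"
  shows "\<exists>z\<in>{0..1}. k = G (u z) + V z"
proof -
  have su: "sol k u" and per: "u 0 = u 1" using p unfolding psol_def by auto
  obtain z where z: "0 < z" "z < 1" "(\<lambda>v. (k - G (u z) - V z) * v) = (\<lambda>v. 0)"
  proof -
    have "\<exists>z. 0 < z \<and> z < 1 \<and> (\<lambda>v. (k - G (u z) - V z) * v) = (\<lambda>v. 0)"
    proof (rule Rolle_deriv[OF _ per sol_cont[OF su]])
      fix x :: real assume x: "0 < x" "x < 1"
      have at: "at x within {0..1} = at x" by (rule at_within_interior) (use x in auto)
      have "(u has_real_derivative k - G (u x) - V x) (at x)" using su x at unfolding sol_def
        by (metis atLeastAtMost_iff less_eq_real_def)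
      then show "(u has_derivative (\<lambda>v. (k - G (u x) - V x) * v)) (at x)"
        by (simp add: has_field_derivative_def)
    qed simp
    then show ?thesis using that by blast
  qed
  have "k - G (u z) - V z = 0" using fun_cong[OF z(3), of 1] by simp
  then show ?thesis using z by (intro bexI[of _ z]) auto
qed

lemma psol_mean_le_imp:
  assumes p1: "psol k1 u1" and p2: "psol k2 u2" and le: "integral {0..1} u1 \<le> integral {0..1} u2"
  shows "\<forall>x\<in>{0..1}. u1 x \<le> u2 x"
proof (cases "integral {0..1} u1 = integral {0..1} u2")
  case True then show ?thesis using psol_mean_eq_imp[OF p1 p2] by auto
next
  case False then show ?thesis using psol_mean_lt_imp[OF p1 p2] le by (meson less_eq_real_def)
qed

lemma psol_limit:
  assumes ps: "\<And>n. psol (ks n) (us n)"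
    and mono: "\<And>n x. x \<in> {0..1} \<Longrightarrow> us n x \<le> us (Suc n) x"
    and bnd: "\<And>n x. x \<in> {0..1} \<Longrightarrow> A \<le> us n x \<and> us n x \<le> B"
    and kl: "ks \<longlonglongrightarrow> k"
  shows "\<exists>u. psol k u \<and> (\<lambda>n. integral {0..1} (us n)) \<longlonglongrightarrow> integral {0..1} u"
proof -
  define u where "u x = (SUP n. us n x)" for x
  have lim: "(\<lambda>n. us n x) \<longlonglongrightarrow> u x" if x: "x \<in> {0..1}" for x
    unfolding u_def
  proof (rule LIMSEQ_incseq_SUP)
    show "bdd_above (range (\<lambda>n. us n x))" using bnd x by (auto intro!: bdd_aboveI[of _ B])
    show "incseq (\<lambda>n. us n x)" using mono x by (auto intro!: incseq_SucI)
  qed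
  have uAB: "A \<le> u x \<and> u x \<le> B" if x: "x \<in> {0..1}" for x
  proof
    show "A \<le> u x" by (rule LIMSEQ_le_const[OF lim[OF x]]) (use bnd x in auto)
    show "u x \<le> B" by (rule LIMSEQ_le_const2[OF lim[OF x]]) (use bnd x in auto)
  qed
  obtain GM where GM: "\<forall>y\<in>{A..B}. \<bar>G y\<bar> \<le> GM" using G_bound by blast
  obtain VM where VM: "\<forall>y\<in>{0..1}. \<bar>V y\<bar> \<le> VM" using V_bound by blast
  have "Bseq ks" using kl by (intro convergent_imp_Bseq) (auto simp: convergent_def)
  then obtain KB where KB0: "\<forall>n. norm (ks n) \<le> KB" unfolding Bseq_def by blast
  have KB: "\<bar>ks n\<bar> \<le> KB" for n using KB0 by simp
  define h where "h n t = ks n - G (us n t) - V t" for n t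
  define hl where "hl t = k - G (u t) - V t" for t
  have ucs: "continuous_on {0..1} (us n)" for n using psol_cont[OF ps] .
  have hc: "continuous_on {0..1} (h n)" for n
    unfolding h_def by (intro continuous_intros comp_G_cont ucs Vc)
  have dcx: "hl integrable_on {0..x} \<and> (\<lambda>n. integral {0..x} (h n)) \<longlonglongrightarrow> integral {0..x} hl" if x: "x \<in> {0..1}" for x
  proof -
    have p1: "h n integrable_on {0..x}" for n
      by (rule integrable_continuous_interval, rule continuous_on_subset[OF hc]) (use x in auto)
    have p2: "(\<lambda>_. KB + GM + VM) integrable_on {0..x}" by (rule integrable_const_ivl)
    have p3: "norm (h n t) \<le> KB + GM + VM" if t: "t \<in> {0..x}" for n t
    proof -
      have t1: "t \<in> {0..1}" using t x by auto
      have "\<bar>G (us n t)\<bar> \<le> GM" using GM bnd[OF t1] by auto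
      moreover have "\<bar>V t\<bar> \<le> VM" using VM t1 by auto
      moreover have "\<bar>ks n\<bar> \<le> KB" by (rule KB)
      ultimately show ?thesis unfolding h_def using abs_triangle_ineq4[of "ks n - G (us n t)" "V t"]
        abs_triangle_ineq4[of "ks n" "G (us n t)"] by simp
    qed
    have p4: "(\<lambda>n. h n t) \<longlonglongrightarrow> hl t" if t: "t \<in> {0..x}" for t
    proof -
      have t1: "t \<in> {0..1}" using t x by auto
      have "(\<lambda>n. G (us n t)) \<longlonglongrightarrow> G (u t)" by (rule isCont_tendsto_compose[OF G_isCont lim[OF t1]])
      then show ?thesis unfolding h_def hl_def by (intro tendsto_intros kl)
    qed
    show ?thesis using dominated_convergence[OF p1 p2 p3 p4] by auto
  qed
  have ueq: "u x = u 0 + integral {0..x} hl" if x: "x \<in> {0..1}" for x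
  proof -
    have "integral {0..x} (h n) = us n x - us n 0" for n
    proof -
      have "sol (ks n) (us n)" using ps[of n] unfolding psol_def by auto
      from sol_int[OF this x] show ?thesis unfolding h_def by (rule integral_unique)
    qed
    then have "(\<lambda>n. integral {0..x} (h n)) = (\<lambda>n. us n x - us n 0)" by auto
    then have "(\<lambda>n. us n x - us n 0) \<longlonglongrightarrow> integral {0..x} hl" using dcx[OF x] by simp
    moreover have "(\<lambda>n. us n x - us n 0) \<longlonglongrightarrow> u x - u 0" by (intro tendsto_intros lim x) auto
    ultimately show ?thesis using LIMSEQ_unique by fastforce
  qed
  have "continuous_on {0..1} (\<lambda>x. integral {0..x} hl)"
    by (rule indefinite_integral_continuous_1) (use dcx[of 1] in auto)
  then have "continuous_on {0..1} (\<lambda>x. u 0 + integral {0..x} hl)" by (intro continuous_intros)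
  then have uc: "continuous_on {0..1} u" by (rule continuous_on_eq) (erule ueq[symmetric])
  have hlc: "continuous_on {0..1} hl" unfolding hl_def by (intro continuous_intros comp_G_cont uc Vc)
  have "sol k u" unfolding sol_def
  proof
    fix x :: real assume x: "x \<in> {0..1}"
    have "((\<lambda>x. u 0 + integral {0..x} hl) has_real_derivative 0 + hl x) (at x within {0..1})"
      by (rule DERIV_add[OF DERIV_const integral_has_real_derivative[OF hlc x]])
    then have "(u has_real_derivative 0 + hl x) (at x within {0..1})"
      by (rule has_field_derivative_transform_within[where d=1]) (use x in \<open>auto simp: ueq[symmetric]\<close>)
    then show "(u has_real_derivative k - G (u x) - V x) (at x within {0..1})" unfolding hl_def by simp
  qed
  moreover have "u 0 = u 1"
  proof -
    have "(\<lambda>n. us n 0) \<longlonglongrightarrow> u 0" by (rule lim) auto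
    moreover have "(\<lambda>n. us n 0) \<longlonglongrightarrow> u 1" using lim[of 1] ps unfolding psol_def by simp
    ultimately show ?thesis using LIMSEQ_unique by blast
  qed
  moreover have "(\<lambda>n. integral {0..1} (us n)) \<longlonglongrightarrow> integral {0..1} u"
  proof -
    have q1: "us n integrable_on {0..1}" for n by (rule integrable_continuous_interval[OF ucs])
    have q2: "(\<lambda>_. \<bar>A\<bar> + \<bar>B\<bar>) integrable_on {0..1::real}" by (rule integrable_const_ivl)
    have q3: "norm (us n t) \<le> \<bar>A\<bar> + \<bar>B\<bar>" if "t \<in> {0..1}" for n t
      using bnd[OF that, of n] by auto
    have q4: "(\<lambda>n. us n t) \<longlonglongrightarrow> u t" if "t \<in> {0..1}" for t by (rule lim[OF that])
    show ?thesis using dominated_convergence[OF q1 q2 q3 q4] by auto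
  qed
  ultimately show ?thesis unfolding psol_def by blast
qed

end

context ode begin

lemma sup_attained:
  assumes p0: "psol k0 u0" "integral {0..1} u0 \<le> \<theta>"
    and pU: "psol kU uU" "integral {0..1} uU > \<theta>"
  shows "\<exists>k u. psol k u \<and> integral {0..1} u \<le> \<theta> \<and>
           (\<forall>k' u'. psol k' u' \<and> integral {0..1} u' \<le> \<theta> \<longrightarrow> integral {0..1} u' \<le> integral {0..1} u)"
proof -
  define S where "S = {m. \<exists>k u. psol k u \<and> integral {0..1} u = m \<and> m \<le> \<theta>}"
  have Sne: "S \<noteq> {}" using p0 unfolding S_def by auto
  have Sbdd: "bdd_above S" unfolding S_def by (auto intro: bdd_aboveI[of _ \<theta>])
  define s where "s = Sup S"
  have inS: "integral {0..1} u \<le> s" if "psol k u" "integral {0..1} u \<le> \<theta>" for k u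
    unfolding s_def by (rule cSup_upper[OF _ Sbdd]) (use that in \<open>auto simp: S_def\<close>)
  have sth: "s \<le> \<theta>" unfolding s_def by (rule cSup_least[OF Sne]) (auto simp: S_def)
  have "\<forall>n. \<exists>ku. psol (fst ku) (snd ku) \<and> integral {0..1} (snd ku) \<le> \<theta> \<and>
          s - inverse (real (Suc n)) < integral {0..1} (snd ku)"
  proof
    fix n
    have "s - inverse (real (Suc n)) < s" by simp
    then obtain m where "m \<in> S" "s - inverse (real (Suc n)) < m" using less_cSupD[OF Sne] unfolding s_def by blast
    then show "\<exists>ku. psol (fst ku) (snd ku) \<and> integral {0..1} (snd ku) \<le> \<theta> \<and>
          s - inverse (real (Suc n)) < integral {0..1} (snd ku)" unfolding S_def by auto
  qed
  then obtain F where F: "\<And>n. psol (fst (F n)) (snd (F n)) \<and> integral {0..1} (snd (F n)) \<le> \<theta> \<and>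
          s - inverse (real (Suc n)) < integral {0..1} (snd (F n))"
    by metis
  define ks where "ks n = fst (F n)" for n
  define us where "us n = snd (F n)" for n
  define m where "m n = integral {0..1} (us n)" for n
  have ps: "psol (ks n) (us n)" for n using F unfolding ks_def us_def by auto
  have mth: "m n \<le> \<theta>" for n using F unfolding m_def us_def by auto
  have ms: "m n \<le> s" for n unfolding m_def by (rule inS[OF ps mth[unfolded m_def]])
  have mlow: "s - inverse (real (Suc n)) < m n" for n using F unfolding m_def us_def by auto
  have mlim: "m \<longlonglongrightarrow> s"
  proof (rule tendsto_sandwich[of "\<lambda>n. s - inverse (real (Suc n))" m sequentially "\<lambda>n. s"])
    show "eventually (\<lambda>n. s - inverse (real (Suc n)) \<le> m n) sequentially"
      using mlow less_imp_le by (intro always_eventually) blast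
    show "eventually (\<lambda>n. m n \<le> s) sequentially" using ms by auto
    have "(\<lambda>n. s - inverse (real (Suc n))) \<longlonglongrightarrow> s - 0"
      by (intro tendsto_intros LIMSEQ_inverse_real_of_nat)
    then show "(\<lambda>n. s - inverse (real (Suc n))) \<longlonglongrightarrow> s" by simp
  qed simp
  obtain r where r: "strict_mono r" "monoseq (\<lambda>n. m (r n))" using seq_monosub[of m] by blast
  have mrlim: "(\<lambda>n. m (r n)) \<longlonglongrightarrow> s" using LIMSEQ_subseq_LIMSEQ[OF mlim r(1)] by (simp add: o_def)
  show ?thesis
  proof (cases "decseq (\<lambda>n. m (r n))")
    case True
    have "s \<le> m (r 0)" using decseq_ge[OF True mrlim] by simp
    then have "m (r 0) = s" using ms[of "r 0"] by simp
    then show ?thesis using ps[of "r 0"] mth[of "r 0"] inS unfolding m_def by auto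
  next
    case False
    then have inc: "incseq (\<lambda>n. m (r n))" using r(2) unfolding monoseq_iff by auto
    have ple: "\<forall>x\<in>{0..1}. us (r a) x \<le> us (r b) x" if "a \<le> b" for a b
      by (rule psol_mean_le_imp[OF ps ps]) (use incseqD[OF inc that] in \<open>simp add: m_def\<close>)
    obtain M0 where M0: "\<forall>x\<in>{0..1}. \<bar>us (r 0) x\<bar> \<le> M0" using cont_bound[OF psol_cont[OF ps]] by blast
    obtain MU where MU: "\<forall>x\<in>{0..1}. \<bar>uU x\<bar> \<le> MU" using cont_bound[OF psol_cont[OF pU(1)]] by blast
    have pU': "\<forall>x\<in>{0..1}. us n x < uU x" for n
      by (rule psol_mean_lt_imp[OF ps pU(1)]) (use mth[of n] pU(2) in \<open>simp add: m_def\<close>)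
    have bnd: "- M0 \<le> us (r n) x \<and> us (r n) x \<le> MU" if x: "x \<in> {0..1}" for n x
    proof
      have "us (r 0) x \<le> us (r n) x" using ple[of 0 n] x by auto
      moreover have "\<bar>us (r 0) x\<bar> \<le> M0" using M0 x by auto
      ultimately show "- M0 \<le> us (r n) x" by (auto simp: abs_le_iff)
      have "us (r n) x < uU x" using pU' x by auto
      moreover have "\<bar>uU x\<bar> \<le> MU" using MU x by auto
      ultimately show "us (r n) x \<le> MU" by (auto simp: abs_le_iff)
    qed
    obtain GM where GM: "\<forall>y\<in>{-M0..MU}. \<bar>G y\<bar> \<le> GM" using G_bound by blast
    obtain VM where VM: "\<forall>y\<in>{0..1}. \<bar>V y\<bar> \<le> VM" using V_bound by blast
    have kb: "\<bar>ks (r n)\<bar> \<le> GM + VM" for n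
    proof -
      obtain z where z: "z \<in> {0..1}" "ks (r n) = G (us (r n) z) + V z" using k_bound[OF ps] by blast
      have "us (r n) z \<in> {-M0..MU}" using bnd[OF z(1)] by auto
      then have "\<bar>G (us (r n) z)\<bar> \<le> GM" using GM by auto
      moreover have "\<bar>V z\<bar> \<le> VM" using VM z by auto
      ultimately show ?thesis using z(2) by linarith
    qed
    have "bounded (range (\<lambda>n. ks (r n)))" unfolding bounded_iff using kb by (auto intro!: exI[of _ "GM + VM"])
    then obtain l r2 where r2: "strict_mono r2" "((\<lambda>n. ks (r n)) \<circ> r2) \<longlonglongrightarrow> l"
      using bounded_imp_convergent_subsequence by blast
    have mono2: "us (r (r2 n)) x \<le> us (r (r2 (Suc n))) x" if "x \<in> {0..1}" for n x
    proof -
      have "r2 n \<le> r2 (Suc n)" using r2(1) by (simp add: strict_mono_leD)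
      then show ?thesis using ple that by blast
    qed
    obtain u where u: "psol l u" "(\<lambda>n. integral {0..1} (us (r (r2 n)))) \<longlonglongrightarrow> integral {0..1} u"
      using psol_limit[of "\<lambda>n. ks (r (r2 n))" "\<lambda>n. us (r (r2 n))", OF ps mono2 bnd] r2(2)
      by (auto simp: o_def)
    have "(\<lambda>n. m (r (r2 n))) \<longlonglongrightarrow> s" using LIMSEQ_subseq_LIMSEQ[OF mrlim r2(1)] by (simp add: o_def)
    then have "integral {0..1} u = s" using u(2) LIMSEQ_unique unfolding m_def by blast
    then show ?thesis using u(1) sth inS by auto
  qed
qed

lemma inf_attained:
  assumes p0: "psol k0 u0" "integral {0..1} u0 \<ge> \<theta>"
    and pL: "psol kL uL" "integral {0..1} uL < \<theta>"
  shows "\<exists>k u. psol k u \<and> integral {0..1} u \<ge> \<theta> \<and>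
           (\<forall>k' u'. psol k' u' \<and> integral {0..1} u' \<ge> \<theta> \<longrightarrow> integral {0..1} u \<le> integral {0..1} u')"
proof -
  interpret R: ode "\<lambda>p. G (- p)" "\<lambda>p. - G' (- p)" "\<lambda>x. V (1 - x)" by (rule ode_R)
  have m0: "integral {0..1} (\<lambda>x. - u0 (1 - x)) \<le> - \<theta>" using mean_R[OF psol_cont[OF p0(1)]] p0(2) by simp
  have mL: "integral {0..1} (\<lambda>x. - uL (1 - x)) > - \<theta>" using mean_R[OF psol_cont[OF pL(1)]] pL(2) by simp
  obtain k v where v: "R.psol k v" "integral {0..1} v \<le> - \<theta>"
    "\<forall>k' u'. R.psol k' u' \<and> integral {0..1} u' \<le> - \<theta> \<longrightarrow> integral {0..1} u' \<le> integral {0..1} v"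
    using R.sup_attained[OF psol_R[OF p0(1)] m0 psol_R[OF pL(1)] mL] by blast
  have pv: "psol k (\<lambda>x. - v (1 - x))" using R.psol_R[OF v(1)] by simp
  have mv: "integral {0..1} (\<lambda>x. - v (1 - x)) = - integral {0..1} v"
    by (rule mean_R[OF R.psol_cont[OF v(1)]])
  have "integral {0..1} (\<lambda>x. - v (1 - x)) \<le> integral {0..1} u'" if "psol k' u'" "integral {0..1} u' \<ge> \<theta>" for k' u'
  proof -
    have a: "R.psol k' (\<lambda>x. - u' (1 - x))" by (rule psol_R[OF that(1)])
    have b: "integral {0..1} (\<lambda>x. - u' (1 - x)) = - integral {0..1} u'" by (rule mean_R[OF psol_cont[OF that(1)]])
    have "integral {0..1} (\<lambda>x. - u' (1 - x)) \<le> - \<theta>" using b that(2) by simp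
    then have "integral {0..1} (\<lambda>x. - u' (1 - x)) \<le> integral {0..1} v" using v(3) a by blast
    then show ?thesis using b mv by simp
  qed
  then show ?thesis using pv mv v(2) by (intro exI[of _ k] exI[of _ "\<lambda>x. - v (1 - x)"]) auto
qed

lemma lower_const: "(\<And>x. x \<in> {0..1} \<Longrightarrow> 0 \<le> k - G c - V x) \<Longrightarrow> lower k (\<lambda>_. c)"
  unfolding lower_def by (intro exI[of _ "\<lambda>_. 0"]) auto

lemma upper_const: "(\<And>x. x \<in> {0..1} \<Longrightarrow> k - G c - V x \<le> 0) \<Longrightarrow> upper k (\<lambda>_. c)"
  unfolding upper_def by (intro exI[of _ "\<lambda>_. 0"]) auto

lemma big_mean:
  assumes co: "filterlim G at_top at_top"
  shows "\<exists>k u. psol k u \<and> integral {0..1} u \<ge> M"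
proof -
  obtain VM where VM: "\<forall>y\<in>{0..1}. \<bar>V y\<bar> \<le> VM" using V_bound by blast
  define k where "k = G M + VM"
  have "eventually (\<lambda>x. G M + 2 * VM \<le> G x) at_top" using co unfolding filterlim_at_top by blast
  then obtain N where N: "\<And>x. x \<ge> N \<Longrightarrow> G M + 2 * VM \<le> G x" unfolding eventually_at_top_linorder by blast
  define b where "b = max M N"
  have lo: "lower k (\<lambda>_. M)" by (rule lower_const) (use VM in \<open>auto simp: k_def abs_le_iff\<close>)
  have up: "upper k (\<lambda>_. b)"
  proof (rule upper_const)
    fix x :: real assume "x \<in> {0..1}"
    then have "\<bar>V x\<bar> \<le> VM" using VM by auto
    moreover have "G M + 2 * VM \<le> G b" using N[of b] unfolding b_def by auto
    ultimately show "k - G b - V x \<le> 0" unfolding k_def by (auto simp: abs_le_iff)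
  qed
  obtain u where u: "psol k u" "\<forall>x\<in>{0..1}. M \<le> u x \<and> u x \<le> b"
    using subsuper[OF lo _ up] unfolding b_def by auto
  have "integral {0..1::real} (\<lambda>_. M) \<le> integral {0..1} u"
  proof (rule Henstock_Kurzweil_Integration.integral_le)
    show "(\<lambda>_. M) integrable_on {0..1::real}" by (rule integrable_const_ivl)
    show "u integrable_on {0..1}" by (rule integrable_continuous_interval[OF psol_cont[OF u(1)]])
  qed (use u in auto)
  then show ?thesis using u(1) by auto
qed

lemma small_mean:
  assumes co: "filterlim G at_top at_bot"
  shows "\<exists>k u. psol k u \<and> integral {0..1} u \<le> M"
proof -
  interpret R: ode "\<lambda>p. G (- p)" "\<lambda>p. - G' (- p)" "\<lambda>x. V (1 - x)" by (rule ode_R)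
  have "filterlim (\<lambda>p. G (- p)) at_top at_top"
    by (rule filterlim_compose[OF co filterlim_uminus_at_bot_at_top])
  then obtain k v where v: "R.psol k v" "integral {0..1} v \<ge> - M" using R.big_mean by blast
  have pv: "psol k (\<lambda>x. - v (1 - x))" using R.psol_R[OF v(1)] by simp
  have "integral {0..1} (\<lambda>x. - v (1 - x)) = - integral {0..1} v" by (rule mean_R[OF R.psol_cont[OF v(1)]])
  then show ?thesis using pv v(2) by (intro exI[of _ k] exI[of _ "\<lambda>x. - v (1 - x)"]) auto
qed

theorem exists_mean:
  assumes co1: "filterlim G at_top at_top" and co2: "filterlim G at_top at_bot"
  shows "\<exists>k u. psol k u \<and> integral {0..1} u = \<theta>"
proof (rule ccontr)
  assume no: "\<not> ?thesis"
  obtain k0 u0 where p0: "psol k0 u0" "integral {0..1} u0 \<le> \<theta>" using small_mean[OF co2] by blast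
  obtain k1 u1 where p1: "psol k1 u1" "integral {0..1} u1 \<ge> \<theta> + 1" using big_mean[OF co1] by blast
  have p1': "integral {0..1} u1 > \<theta>" using p1 by simp
  obtain ka fa where fa: "psol ka fa" "integral {0..1} fa \<le> \<theta>"
    "\<forall>k' u'. psol k' u' \<and> integral {0..1} u' \<le> \<theta> \<longrightarrow> integral {0..1} u' \<le> integral {0..1} fa"
    using sup_attained[OF p0 p1(1) p1'] by blast
  have fa': "integral {0..1} fa < \<theta>" using fa(1,2) no by (metis order_less_le)
  obtain kb fb where fb: "psol kb fb" "integral {0..1} fb \<ge> \<theta>"
    "\<forall>k' u'. psol k' u' \<and> integral {0..1} u' \<ge> \<theta> \<longrightarrow> integral {0..1} fb \<le> integral {0..1} u'"
    using inf_attained[OF p1(1) _ fa(1) fa'] p1' by fastforce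
  have fb': "integral {0..1} fb > \<theta>" using fb(1,2) no by (metis order_less_le)
  obtain k p where p: "psol k p" "integral {0..1} fa < integral {0..1} p" "integral {0..1} p < integral {0..1} fb"
    using gap_mean[OF fa(1) fb(1)] fa' fb' by fastforce
  show False
  proof (cases "integral {0..1} p \<le> \<theta>")
    case True then show False using fa(3) p by fastforce
  next
    case False then show False using fb(3) p by fastforce
  qed
qed

end

definition pext :: "(real \<Rightarrow> real) \<Rightarrow> real \<Rightarrow> real" where
  "pext u x = u (x - of_int \<lfloor>x\<rfloor>)"

lemma per_int:
  fixes f :: "real \<Rightarrow> 'a"
  assumes per: "\<And>x. f (x + 1) = f x"
  shows "f (x + of_int n) = f x"
proof (induction n arbitrary: x rule: int_induct[where k=0])
  case base then show ?case by simp
next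
  case (step1 i)
  have "f (x + of_int (i + 1)) = f ((x + of_int i) + 1)" by (simp add: algebra_simps)
  also have "\<dots> = f x" using per step1 by simp
  finally show ?case .
next
  case (step2 i)
  have "f (x + of_int i) = f ((x + of_int (i - 1)) + 1)" by (simp add: algebra_simps)
  also have "\<dots> = f (x + of_int (i - 1))" by (rule per)
  finally show ?case using step2 by simp
qed

lemma per_frac:
  fixes f :: "real \<Rightarrow> 'a"
  assumes per: "\<And>x. f (x + 1) = f x"
  shows "f (x - of_int \<lfloor>x\<rfloor>) = f x"
proof -
  have "f (x - of_int \<lfloor>x\<rfloor> + of_int \<lfloor>x\<rfloor>) = f (x - of_int \<lfloor>x\<rfloor>)" by (rule per_int) (rule per)
  then show ?thesis by simp
qed

lemma pext_per: "pext u (x + 1) = pext u x"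
  unfolding pext_def by simp

lemma pext_on01: "u 0 = u 1 \<Longrightarrow> x \<in> {0..1} \<Longrightarrow> pext u x = u x"
proof -
  assume u: "u 0 = u 1" and x: "x \<in> {0..1}"
  show ?thesis
  proof (cases "x = 1")
    case True then show ?thesis using u unfolding pext_def by simp
  next
    case False
    then have "\<lfloor>x\<rfloor> = 0" using x by (simp add: floor_eq_iff)
    then show ?thesis unfolding pext_def by simp
  qed
qed

lemma pext_deriv:
  fixes u D :: "real \<Rightarrow> real"
  assumes d: "\<And>t. t \<in> {0..1} \<Longrightarrow> (u has_real_derivative D t) (at t within {0..1})"
    and u01: "u 0 = u 1" and D01: "D 0 = D 1"
  shows "(pext u has_real_derivative D (x - of_int \<lfloor>x\<rfloor>)) (at x)"
proof -
  define n where "n = \<lfloor>x\<rfloor>"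
  define t where "t = x - of_int n"
  have t01: "0 \<le> t" "t < 1" unfolding t_def n_def by linarith+
  show ?thesis
  proof (cases "t = 0")
    case False
    then have tpos: "0 < t" using t01 by auto
    have at: "at t within {0..1} = at t" by (rule at_within_interior) (use tpos t01 in auto)
    have du: "(u has_real_derivative D t) (at t)" using d[of t] at t01 by auto
    have "((\<lambda>y. u (y - of_int n)) has_real_derivative D t * 1) (at x)"
      by (rule DERIV_chain2[where f=u]) (use du t_def in \<open>auto intro!: derivative_eq_intros\<close>)
    then have d1: "((\<lambda>y. u (y - of_int n)) has_real_derivative D t) (at x)" by simp
    have "(pext u has_real_derivative D t) (at x)"
    proof (rule has_field_derivative_transform_within_open[OF d1, of "{of_int n <..< of_int n + 1}"])
      show "open {real_of_int n<..<real_of_int n + 1}" by simp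
      show "x \<in> {real_of_int n<..<real_of_int n + 1}" using tpos t01 unfolding t_def by auto
      fix y assume y: "y \<in> {real_of_int n<..<real_of_int n + 1}"
      then have "\<lfloor>y\<rfloor> = n" by (simp add: floor_eq_iff)
      then show "u (y - real_of_int n) = pext u y" unfolding pext_def by simp
    qed
    then show ?thesis unfolding t_def n_def .
  next
    case True
    then have xn: "x = of_int n" unfolding t_def by simp
    have g1: "((\<lambda>y. y - of_int n) has_real_derivative 1) (at x within {x..x+1})"
      by (auto intro!: derivative_eq_intros)
    have img1: "(\<lambda>y. y - of_int n) ` {x..x+1} = {0..1}"
    proof
      show "(\<lambda>y. y - of_int n) ` {x..x+1} \<subseteq> {0..1}" using xn by auto
      show "{0..1} \<subseteq> (\<lambda>y. y - of_int n) ` {x..x+1}"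
      proof
        fix z :: real assume "z \<in> {0..1}"
        then show "z \<in> (\<lambda>y. y - of_int n) ` {x..x+1}" using xn by (intro image_eqI[of _ _ "z + of_int n"]) auto
      qed
    qed
    have "(u \<circ> (\<lambda>y. y - of_int n) has_real_derivative D 0 * 1) (at x within {x..x+1})"
      by (rule DERIV_image_chain[OF _ g1]) (use d[of 0] xn img1 in simp)
    then have r1: "((\<lambda>y. u (y - of_int n)) has_real_derivative D 0) (at x within {x..x+1})" by (simp add: o_def)
    have r2: "(pext u has_real_derivative D 0) (at x within {x..x+1})"
    proof (rule has_field_derivative_transform_within[OF r1, where d=1])
      show "x \<in> {x..x+1}" by simp
      fix y assume y: "y \<in> {x..x+1}" "dist y x < 1"
      show "u (y - real_of_int n) = pext u y"
      proof (cases "y = x + 1")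
        case True then show ?thesis using u01 xn unfolding pext_def by simp
      next
        case False
        then have "\<lfloor>y\<rfloor> = n" using y xn by (simp add: floor_eq_iff)
        then show ?thesis unfolding pext_def by simp
      qed
    qed simp
    have g2: "((\<lambda>y. y - of_int n + 1) has_real_derivative 1) (at x within {x-1..x})"
      by (auto intro!: derivative_eq_intros)
    have img2: "(\<lambda>y. y - of_int n + 1) ` {x-1..x} = {0..1}"
    proof
      show "(\<lambda>y. y - of_int n + 1) ` {x-1..x} \<subseteq> {0..1}" using xn by auto
      show "{0..1} \<subseteq> (\<lambda>y. y - of_int n + 1) ` {x-1..x}"
      proof
        fix z :: real assume "z \<in> {0..1}"
        then show "z \<in> (\<lambda>y. y - of_int n + 1) ` {x-1..x}" using xn by (intro image_eqI[of _ _ "z + of_int n - 1"]) auto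
      qed
    qed
    have "(u \<circ> (\<lambda>y. y - of_int n + 1) has_real_derivative D 1 * 1) (at x within {x-1..x})"
      by (rule DERIV_image_chain[OF _ g2]) (use d[of 1] xn img2 in simp)
    then have l1: "((\<lambda>y. u (y - of_int n + 1)) has_real_derivative D 0) (at x within {x-1..x})"
      using D01 by (simp add: o_def)
    have l2: "(pext u has_real_derivative D 0) (at x within {x-1..x})"
    proof (rule has_field_derivative_transform_within[OF l1, where d=1])
      show "x \<in> {x-1..x}" by simp
      fix y assume y: "y \<in> {x-1..x}" "dist y x < 1"
      show "u (y - real_of_int n + 1) = pext u y"
      proof (cases "y = x")
        case True then show ?thesis using u01 xn unfolding pext_def by simp
      next
        case False
        then have "y < x" "x - 1 < y" using y by (auto simp: dist_real_def)
        then have "\<lfloor>y\<rfloor> = n - 1" using xn by (simp add: floor_eq_iff)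
        then have fy: "real_of_int \<lfloor>y\<rfloor> = real_of_int n - 1" by simp
        show ?thesis unfolding pext_def fy by (simp add: algebra_simps)
      qed
    qed simp
    have R: "((\<lambda>y. (pext u y - pext u x) / (y - x)) \<longlongrightarrow> D 0) (at_right x)"
      using r2 unfolding has_field_derivative_iff at_within_Icc_at_right[of x "x+1", simplified] .
    have L: "((\<lambda>y. (pext u y - pext u x) / (y - x)) \<longlongrightarrow> D 0) (at_left x)"
      using l2 unfolding has_field_derivative_iff at_within_Icc_at_left[of "x-1" x, simplified] .
    have "((\<lambda>y. (pext u y - pext u x) / (y - x)) \<longlongrightarrow> D 0) (at x)"
      unfolding at_eq_sup_left_right by (rule filterlim_sup[OF L R])
    then have "(pext u has_real_derivative D 0) (at x)" unfolding has_field_derivative_iff .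
    then show ?thesis using True unfolding t_def n_def by simp
  qed
qed

context ode begin

lemma psol_cell:
  assumes Vper: "\<And>x. V (x + 1) = V x" and Vcont: "continuous_on UNIV V" and p: "psol k u"
  shows "cell_sol G V (integral {0..1} u) k (pext u)"
proof -
  have su: "sol k u" and u01: "u 0 = u 1" using p unfolding psol_def by auto
  define D where "D t = k - G (u t) - V t" for t
  have D01: "D 0 = D 1" unfolding D_def using u01 Vper[of 0] by simp
  have dd: "(pext u has_real_derivative D (x - of_int \<lfloor>x\<rfloor>)) (at x)" for x
    by (rule pext_deriv[OF _ u01 D01]) (use su in \<open>auto simp: sol_def D_def\<close>)
  have Dx: "D (x - of_int \<lfloor>x\<rfloor>) = k - G (pext u x) - V x" for x
    unfolding D_def pext_def using per_frac[of V x] Vper by simp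
  have d2: "(pext u has_real_derivative k - G (pext u x) - V x) (at x)" for x using dd[of x] Dx[of x] by simp
  have pc: "continuous_on UNIV (pext u)" by (rule has_real_derivative_imp_continuous_on[OF d2])
  have "continuous_on UNIV (\<lambda>x. k - G (pext u x) - V x)"
    by (intro continuous_intros comp_G_cont pc Vcont)
  moreover have "integral {0..1} (pext u) = integral {0..1} u"
    by (rule integral_cong) (use pext_on01[OF u01] in auto)
  ultimately show ?thesis unfolding cell_sol_def using pext_per d2
    by (intro conjI exI[of _ "\<lambda>x. k - G (pext u x) - V x"]) auto
qed

lemma cell_psol:
  assumes cs: "cell_sol G V \<theta> c f"
  shows "psol c f \<and> integral {0..1} f = \<theta>"
proof -
  obtain f' where f': "\<forall>x. (f has_real_derivative f' x) (at x)" "\<forall>x. f' x + G (f x) + V x = c"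
    using cs unfolding cell_sol_def by blast
  have "(f has_real_derivative c - G (f x) - V x) (at x)" for x
  proof -
    have "f' x = c - G (f x) - V x" using f'(2)[rule_format, of x] by linarith
    then show ?thesis using f'(1)[rule_format, of x] by simp
  qed
  then have "sol c f" unfolding sol_def by (auto intro: has_field_derivative_at_within)
  moreover have "f 0 = f 1" using cs unfolding cell_sol_def by (metis add_0)
  ultimately show ?thesis using cs unfolding cell_sol_def psol_def by auto
qed

lemma cell_unique:
  assumes c1: "cell_sol G V \<theta> c1 f1" and c2: "cell_sol G V \<theta> c2 f2"
  shows "c1 = c2 \<and> f1 = f2"
proof -
  have p1: "psol c1 f1" "integral {0..1} f1 = \<theta>" using cell_psol[OF c1] by auto
  have p2: "psol c2 f2" "integral {0..1} f2 = \<theta>" using cell_psol[OF c2] by auto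
  have e: "(\<forall>x\<in>{0..1}. f1 x = f2 x) \<and> c1 = c2" using psol_mean_eq_imp[OF p1(1) p2(1)] p1(2) p2(2) by simp
  have per1: "\<And>x. f1 (x + 1) = f1 x" and per2: "\<And>x. f2 (x + 1) = f2 x"
    using c1 c2 unfolding cell_sol_def by auto
  have "f1 x = f2 x" for x
  proof -
    have "x - of_int \<lfloor>x\<rfloor> \<in> {0..1}" by (simp add: less_imp_le) linarith
    then have "f1 (x - of_int \<lfloor>x\<rfloor>) = f2 (x - of_int \<lfloor>x\<rfloor>)" using e by auto
    then show ?thesis using per_frac[of f1 x] per_frac[of f2 x] per1 per2 by simp
  qed
  then show ?thesis using e by auto
qed

lemma Hbar_fsol:
  assumes cs: "cell_sol G V \<theta> c f"
  shows "Hbar G V \<theta> = c \<and> fsol G V \<theta> = f"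
proof -
  have H: "Hbar G V \<theta> = c" unfolding Hbar_def
  proof (rule the_equality)
    show "\<exists>f. cell_sol G V \<theta> c f" using cs by blast
    fix c' assume "\<exists>f. cell_sol G V \<theta> c' f"
    then show "c' = c" using cell_unique cs by blast
  qed
  have "fsol G V \<theta> = f" unfolding fsol_def H
  proof (rule the_equality)
    show "cell_sol G V \<theta> c f" by (rule cs)
    fix f' assume "cell_sol G V \<theta> c f'"
    then show "f' = f" using cell_unique cs by blast
  qed
  then show ?thesis using H by simp
qed

lemma G_rem:
  assumes uc: "\<forall>x\<in>{-R..R}. \<forall>y\<in>{-R..R}. \<bar>x - y\<bar> < \<rho> \<longrightarrow> \<bar>G' x - G' y\<bar> \<le> \<eta>"
    and p: "p \<in> {-R..R}" and pd: "p + d \<in> {-R..R}" and d: "\<bar>d\<bar> < \<rho>"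
  shows "\<bar>G (p + d) - G p - G' p * d\<bar> \<le> \<eta> * \<bar>d\<bar>"
proof (cases d "0::real" rule: linorder_cases)
  case equal then show ?thesis by simp
next
  case greater
  obtain z where z: "p < z" "z < p + d" "G (p + d) - G p = (p + d - p) * G' z"
    using MVT2[of p "p + d" G G'] Gd greater by auto
  have "z \<in> {-R..R}" using z p pd by auto
  moreover have "\<bar>z - p\<bar> < \<rho>" using z d by auto
  ultimately have "\<bar>G' z - G' p\<bar> \<le> \<eta>" using uc p by blast
  then have "\<bar>d\<bar> * \<bar>G' z - G' p\<bar> \<le> \<bar>d\<bar> * \<eta>" by (intro mult_left_mono) auto
  moreover have "G (p + d) - G p - G' p * d = d * (G' z - G' p)" using z by (simp add: algebra_simps)
  ultimately show ?thesis by (simp add: abs_mult mult.commute)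
next
  case less
  obtain z where z: "p + d < z" "z < p" "G p - G (p + d) = (p - (p + d)) * G' z"
    using MVT2[of "p + d" p G G'] Gd less by auto
  have "z \<in> {-R..R}" using z p pd by auto
  moreover have "\<bar>z - p\<bar> < \<rho>" using z d by auto
  ultimately have "\<bar>G' z - G' p\<bar> \<le> \<eta>" using uc p by blast
  then have "\<bar>d\<bar> * \<bar>G' z - G' p\<bar> \<le> \<bar>d\<bar> * \<eta>" by (intro mult_left_mono) auto
  moreover have "G (p + d) - G p - G' p * d = d * (G' z - G' p)" using z by (simp add: algebra_simps)
  ultimately show ?thesis by (simp add: abs_mult mult.commute)
qed

end

context ode begin

lemma core:
  assumes pf: "psol c f"
    and gd: "\<And>x. x \<in> {0..1} \<Longrightarrow> (g has_real_derivative \<sigma> - G' (f x) * g x) (at x within {0..1})"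
    and g01: "g 0 = g 1" and gpos: "\<And>x. x \<in> {0..1} \<Longrightarrow> g x > 0"
    and \<sigma>: "\<sigma> = 1 \<or> \<sigma> = -1"
  shows "\<exists>h0>0. \<forall>h. 0 < h \<and> h < h0 \<longrightarrow> (\<exists>p. psol (c + h / 2) p \<and>
           min (integral {0..1} f) (integral {0..1} f + \<sigma> * h * integral {0..1} g) < integral {0..1} p \<and>
           integral {0..1} p < max (integral {0..1} f) (integral {0..1} f + \<sigma> * h * integral {0..1} g))"
proof -
  have sf: "sol c f" and f01: "f 0 = f 1" using pf unfolding psol_def by auto
  have fc: "continuous_on {0..1} f" by (rule psol_cont[OF pf])
  have gc: "continuous_on {0..1} g" by (rule DERIV_continuous_on[OF gd])
  have \<sigma>2: "\<sigma> * \<sigma> = 1" "\<bar>\<sigma>\<bar> = 1" using \<sigma> by auto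
  obtain fM where fM: "\<forall>x\<in>{0..1}. \<bar>f x\<bar> \<le> fM" using cont_bound[OF fc] by blast
  obtain gM0 where gM0: "\<forall>x\<in>{0..1}. \<bar>g x\<bar> \<le> gM0" using cont_bound[OF gc] by blast
  define gM where "gM = \<bar>gM0\<bar> + 1"
  have gM: "gM > 0" "\<And>x. x \<in> {0..1} \<Longrightarrow> g x \<le> gM" using gM0 unfolding gM_def by force+
  define R where "R = \<bar>fM\<bar> + gM"
  define \<eta> where "\<eta> = 1 / (4 * gM)"
  have \<eta>: "\<eta> > 0" "\<eta> * gM = 1 / 4" unfolding \<eta>_def using gM by auto
  have "uniformly_continuous_on {-R..R} G'"
    by (rule compact_uniformly_continuous[OF continuous_on_subset[OF G'c]]) auto
  then obtain \<rho> where \<rho>: "\<rho> > 0" "\<forall>x\<in>{-R..R}. \<forall>y\<in>{-R..R}. dist y x < \<rho> \<longrightarrow> dist (G' y) (G' x) < \<eta>"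
    unfolding uniformly_continuous_on_def using \<eta>(1) by metis
  have uc: "\<forall>x\<in>{-R..R}. \<forall>y\<in>{-R..R}. \<bar>x - y\<bar> < \<rho> \<longrightarrow> \<bar>G' x - G' y\<bar> \<le> \<eta>"
    using \<rho>(2) by (auto simp: dist_real_def less_imp_le)
  define h0 where "h0 = min 1 (\<rho> / gM)"
  have h0: "h0 > 0" unfolding h0_def using \<rho> gM by auto
  have main: "\<exists>p. psol (c + h / 2) p \<and>
           min (integral {0..1} f) (integral {0..1} f + \<sigma> * h * integral {0..1} g) < integral {0..1} p \<and>
           integral {0..1} p < max (integral {0..1} f) (integral {0..1} f + \<sigma> * h * integral {0..1} g)"
    if h: "0 < h" "h < h0" for h
  proof -
    have h1: "h < 1" "h * gM < \<rho>" using h gM unfolding h0_def by (auto simp: field_simps)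
    define \<psi> where "\<psi> x = f x + \<sigma> * h * g x" for x
    define \<psi>' where "\<psi>' x = (c - G (f x) - V x) + \<sigma> * h * (\<sigma> - G' (f x) * g x)" for x
    have \<psi>d: "(\<psi> has_real_derivative \<psi>' x) (at x within {0..1})" if x: "x \<in> {0..1}" for x
    proof -
      have df: "(f has_real_derivative c - G (f x) - V x) (at x within {0..1})" using sf x unfolding sol_def by auto
      have dg: "((\<lambda>x. \<sigma> * h * g x) has_real_derivative \<sigma> * h * (\<sigma> - G' (f x) * g x)) (at x within {0..1})"
        by (rule DERIV_cmult[OF gd[OF x]])
      show ?thesis unfolding \<psi>_def[abs_def] \<psi>'_def by (rule DERIV_add[OF df dg])
    qed
    have key: "\<psi>' x - ((c + h / 2) - G (\<psi> x) - V x) \<ge> h / 4" if x: "x \<in> {0..1}" for x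
    proof -
      define d where "d = \<sigma> * h * g x"
      have ad: "\<bar>d\<bar> = h * g x" unfolding d_def using \<sigma>2 h gpos[OF x] by (simp add: abs_mult)
      have gx: "g x \<le> gM" "g x > 0" using gM(2)[OF x] gpos[OF x] by auto
      have adl: "\<bar>d\<bar> \<le> h * gM" unfolding ad using gx h by (intro mult_left_mono) auto
      have fx: "\<bar>f x\<bar> \<le> fM" using fM x by auto
      have pR: "f x \<in> {-R..R}" using fx gM unfolding R_def by (auto simp: abs_le_iff)
      have pdR: "f x + d \<in> {-R..R}"
      proof -
        have "h * gM \<le> gM" using h1 gM by (simp add: mult_le_cancel_right1)
        then show ?thesis using fx adl unfolding R_def by (auto simp: abs_le_iff)
      qed
      have dr: "\<bar>d\<bar> < \<rho>" using adl h1 by linarith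
      have rem: "\<bar>G (f x + d) - G (f x) - G' (f x) * d\<bar> \<le> \<eta> * \<bar>d\<bar>" by (rule G_rem[OF uc pR pdR dr])
      have "\<eta> * \<bar>d\<bar> \<le> \<eta> * (h * gM)" using adl \<eta> by (intro mult_left_mono) auto
      also have "\<dots> = h / 4" using \<eta>(2) by (simp add: algebra_simps)
      finally have r4: "\<bar>G (f x + d) - G (f x) - G' (f x) * d\<bar> \<le> h / 4" using rem by linarith
      have "\<psi>' x - ((c + h / 2) - G (\<psi> x) - V x) = h / 2 + (G (f x + d) - G (f x) - G' (f x) * d)"
        unfolding \<psi>'_def \<psi>_def d_def using \<sigma>2(1) by (simp add: algebra_simps)
      moreover have "- (h / 4) \<le> G (f x + d) - G (f x) - G' (f x) * d" using r4 abs_ge_minus_self[of "G (f x + d) - G (f x) - G' (f x) * d"] by linarith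
      ultimately show ?thesis by linarith
    qed
    have up: "upper (c + h / 2) \<psi>" unfolding upper_def
    proof (intro exI[of _ \<psi>'] ballI conjI)
      fix x :: real assume x: "x \<in> {0..1}"
      show "(\<psi> has_real_derivative \<psi>' x) (at x within {0..1})" by (rule \<psi>d[OF x])
      show "c + h / 2 - G (\<psi> x) - V x \<le> \<psi>' x" using key[OF x] h by linarith
    qed
    have \<psi>01: "\<psi> 0 = \<psi> 1" unfolding \<psi>_def using f01 g01 by simp
    have lo: "lower (c + h / 2) f" by (rule sol_lower[OF sf]) (use h in auto)
    obtain p where p: "psol (c + h / 2) p"
      "\<forall>x\<in>{0..1}. (f x \<le> p x \<and> p x \<le> \<psi> x) \<or> (\<psi> x \<le> p x \<and> p x \<le> f x)"
      and pside: "(\<sigma> = 1 \<and> (\<forall>x\<in>{0..1}. f x \<le> p x \<and> p x \<le> \<psi> x)) \<or> (\<sigma> = -1 \<and> (\<forall>x\<in>{0..1}. \<psi> x \<le> p x \<and> p x \<le> f x))"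
    proof (cases "\<sigma> = 1")
      case True
      have le: "\<forall>x\<in>{0..1}. f x \<le> \<psi> x" unfolding \<psi>_def using True h gpos by (auto intro: less_imp_le)
      obtain p where "psol (c + h / 2) p" "\<forall>x\<in>{0..1}. f x \<le> p x \<and> p x \<le> \<psi> x"
        using subsuper[OF lo _ up _ le] f01 \<psi>01 by auto
      then show ?thesis using that True by auto
    next
      case False
      then have s: "\<sigma> = -1" using \<sigma> by auto
      have le: "\<forall>x\<in>{0..1}. \<psi> x \<le> f x" unfolding \<psi>_def using s h gpos by (auto intro: less_imp_le)
      obtain p where "psol (c + h / 2) p" "\<forall>x\<in>{0..1}. \<psi> x \<le> p x \<and> p x \<le> f x"
        using subsuper_rev[OF lo _ up _ le] f01 \<psi>01 by auto
      then show ?thesis using that s by auto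
    qed
    have sp: "sol (c + h / 2) p" and p01: "p 0 = p 1" using p(1) unfolding psol_def by auto
    have pc: "continuous_on {0..1} p" by (rule psol_cont[OF p(1)])
    have \<psi>c: "continuous_on {0..1} \<psi>" by (rule DERIV_continuous_on[OF \<psi>d])
    define w where "w x = \<psi> x - p x" for x
    have wd: "(w has_real_derivative \<psi>' x - ((c + h / 2) - G (p x) - V x)) (at x within {0..1})"
      if x: "x \<in> {0..1}" for x
      unfolding w_def[abs_def] by (rule DERIV_diff[OF \<psi>d[OF x]]) (use sp x in \<open>auto simp: sol_def\<close>)
    have wnz: "\<forall>x\<in>{0..1}. w x \<noteq> 0"
    proof (rule nozero[OF wd])
      show "w 0 = w 1" unfolding w_def using \<psi>01 p01 by simp
      fix x :: real assume x: "x \<in> {0..1}" and "w x = 0"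
      then have "p x = \<psi> x" unfolding w_def by simp
      then show "\<psi>' x - ((c + h / 2) - G (p x) - V x) > 0" using key[OF x] h by simp
    qed
    have fneq: "\<exists>x\<in>{0..1}. f x \<noteq> p x"
    proof (rule ccontr)
      assume "\<not> ?thesis" then have "\<forall>x\<in>{0..1}. p x = f x" by auto
      then have "c + h / 2 = c" using sol_k_unique sp sf by blast
      then show False using h by simp
    qed
    have int\<psi>: "integral {0..1} \<psi> = integral {0..1} f + \<sigma> * h * integral {0..1} g"
    proof -
      have "integral {0..1} \<psi> = integral {0..1} f + integral {0..1} (\<lambda>x. \<sigma> * h * g x)"
        unfolding \<psi>_def[abs_def]
        by (rule integral_add) (auto intro!: integrable_continuous_interval continuous_intros fc gc)
      then show ?thesis by simp
    qed
    have intw: "integral {0..1} \<psi> - integral {0..1} p = integral {0..1} w"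
      unfolding w_def[abs_def]
      by (rule integral_diff[symmetric]) (auto intro!: integrable_continuous_interval \<psi>c pc)
    have wc: "continuous_on {0..1} w" unfolding w_def[abs_def] by (intro continuous_intros \<psi>c pc)
    have gint: "integral {0..1} g > 0" by (rule integral_pos_cont[OF gc]) (use gpos in auto)
    from pside show ?thesis
    proof
      assume A: "\<sigma> = 1 \<and> (\<forall>x\<in>{0..1}. f x \<le> p x \<and> p x \<le> \<psi> x)"
      have "\<forall>x\<in>{0..1}. f x < p x" by (rule psol_le_strict[OF pf p(1)]) (use A fneq in auto)
      then have m1: "integral {0..1} f < integral {0..1} p" by (rule psol_lt_mean[OF pf p(1)])
      have "\<forall>x\<in>{0..1}. w x > 0"
      proof
        fix x :: real assume x: "x \<in> {0..1}"
        then have "w x \<ge> 0" using A unfolding w_def by auto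
        then show "w x > 0" using wnz x by force
      qed
      then have "integral {0..1} w > 0" by (rule integral_pos_cont[OF wc])
      then have m2: "integral {0..1} p < integral {0..1} f + \<sigma> * h * integral {0..1} g" using intw int\<psi> by simp
      have "\<sigma> * h * integral {0..1} g > 0" using A h gint by simp
      then show ?thesis using m1 m2 p(1) by (intro exI[of _ p]) auto
    next
      assume A: "\<sigma> = -1 \<and> (\<forall>x\<in>{0..1}. \<psi> x \<le> p x \<and> p x \<le> f x)"
      obtain x0 where x0: "x0 \<in> {0..1}" "f x0 \<noteq> p x0" using fneq by blast
      have ne: "\<exists>x\<in>{0..1}. p x \<noteq> f x" using x0 by (intro bexI[of _ x0]) auto
      have "\<forall>x\<in>{0..1}. p x < f x" by (rule psol_le_strict[OF p(1) pf _ ne]) (use A in auto)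
      then have m1: "integral {0..1} p < integral {0..1} f" by (rule psol_lt_mean[OF p(1) pf])
      have "\<forall>x\<in>{0..1}. w x < 0"
      proof
        fix x :: real assume x: "x \<in> {0..1}"
        then have "w x \<le> 0" using A unfolding w_def by auto
        then show "w x < 0" using wnz x by force
      qed
      then have "integral {0..1} (\<lambda>x. - w x) > 0" by (intro integral_pos_cont) (auto intro!: continuous_intros wc)
      then have m2: "integral {0..1} f + \<sigma> * h * integral {0..1} g < integral {0..1} p" using intw int\<psi> by simp
      have "\<sigma> * h * integral {0..1} g < 0" using A h gint by (simp add: mult_pos_pos)
      then show ?thesis using m1 m2 p(1) by (intro exI[of _ p]) auto
    qed
  qed
  show ?thesis using h0 main by blast
qed

end

lemma gprops:
  fixes a I B g :: "real \<Rightarrow> real" and s :: real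
  assumes ac: "continuous_on {0..1} a"
    and Idef: "\<And>x. I x = integral {0..x} a"
    and Bdef: "\<And>x. B x = integral {0..x} (\<lambda>y. exp (I y))"
    and I1: "I 1 \<noteq> 0"
    and sdef: "s = (if I 1 > 0 then 1 else -1)"
    and gdef: "\<And>x. g x = s * (B x + B 1 / (exp (I 1) - 1)) * exp (- I x)"
  shows "(\<forall>x\<in>{0..1}. (g has_real_derivative s - a x * g x) (at x within {0..1})) \<and> g 0 = g 1 \<and> (\<forall>x\<in>{0..1}. g x > 0)"
proof -
  have Ieq: "I = (\<lambda>x. integral {0..x} a)" using Idef by auto
  have Beq: "B = (\<lambda>x. integral {0..x} (\<lambda>y. exp (I y)))" using Bdef by auto
  have geq: "g = (\<lambda>x. s * (B x + B 1 / (exp (I 1) - 1)) * exp (- I x))" using gdef by auto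
  define K where "K = B 1 / (exp (I 1) - 1)"
  have dI: "(I has_real_derivative a x) (at x within {0..1})" if "x \<in> {0..1}" for x
    unfolding Ieq by (rule integral_has_real_derivative[OF ac that])
  have Ic: "continuous_on {0..1} I" by (rule DERIV_continuous_on[OF dI])
  have eIc: "continuous_on {0..1} (\<lambda>y. exp (I y))" by (intro continuous_intros Ic)
  have dB: "(B has_real_derivative exp (I x)) (at x within {0..1})" if "x \<in> {0..1}" for x
    unfolding Beq by (rule integral_has_real_derivative[OF eIc that])
  have I0: "I 0 = 0" and B0: "B 0 = 0" using Idef Bdef by auto
  have dg: "(g has_real_derivative s - a x * g x) (at x within {0..1})" if x: "x \<in> {0..1}" for x
  proof -
    have d1: "((\<lambda>x. s * (B x + K)) has_real_derivative s * (exp (I x) + 0)) (at x within {0..1})"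
      by (rule DERIV_cmult[OF DERIV_add[OF dB[OF x] DERIV_const]])
    have d2: "((\<lambda>x. exp (- I x)) has_real_derivative exp (- I x) * (- a x)) (at x within {0..1})"
      by (rule DERIV_chain2[OF DERIV_exp DERIV_minus[OF dI[OF x]]])
    have "((\<lambda>x. s * (B x + K) * exp (- I x)) has_real_derivative
        s * (exp (I x) + 0) * exp (- I x) + exp (- I x) * (- a x) * (s * (B x + K))) (at x within {0..1})"
      by (rule DERIV_mult[OF d1 d2])
    then have D: "((\<lambda>x. s * (B x + K) * exp (- I x)) has_real_derivative
        s * (exp (I x) + 0) * exp (- I x) + exp (- I x) * (- a x) * (s * (B x + K))) (at x within {0..1})" .
    have ee: "exp (I x) * exp (- I x) = 1" by (simp add: exp_minus_inverse)
    have EQ: "s * (exp (I x) + 0) * exp (- I x) + exp (- I x) * (- a x) * (s * (B x + K))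
        = s - a x * (s * (B x + K) * exp (- I x))"
    proof -
      have "s * (exp (I x) + 0) * exp (- I x) = s * (exp (I x) * exp (- I x))" by (simp add: mult.assoc)
      also have "\<dots> = s" using ee by simp
      finally show ?thesis by (simp add: algebra_simps)
    qed
    have gK: "g = (\<lambda>x. s * (B x + K) * exp (- I x))" unfolding K_def by (rule geq)
    show ?thesis unfolding gK using DERIV_cong[OF D EQ] by simp
  qed
  have e1: "exp (I 1) \<noteq> 1" using I1 by simp
  have g01: "g 0 = g 1"
  proof -
    have "g 0 = s * K" unfolding gdef K_def using I0 B0 by simp
    moreover have "g 1 = s * K"
    proof -
      have "B 1 + K = K * exp (I 1)" unfolding K_def using e1 by (simp add: field_simps)
      then have "g 1 = s * (K * exp (I 1)) * exp (- I 1)" unfolding gdef K_def by simp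
      also have "\<dots> = s * K" by (simp add: exp_minus field_simps)
      finally show ?thesis .
    qed
    ultimately show ?thesis by simp
  qed
  have Bmono: "B x \<le> B y" if "0 \<le> x" "x \<le> y" "y \<le> 1" for x y
    by (rule deriv_nonneg_mono[where f=B and a=0 and b=1, OF dB]) (use that in auto)
  have B1: "B 1 > 0"
  proof -
    have "integral {0..1} (\<lambda>y. exp (I y)) > 0" by (rule integral_pos_cont[OF eIc]) auto
    then show ?thesis using Bdef by simp
  qed
  have gpos: "g x > 0" if x: "x \<in> {0..1}" for x
  proof (cases "I 1 > 0")
    case True
    then have "exp (I 1) - 1 > 0" by simp
    then have "K > 0" unfolding K_def using B1 by simp
    moreover have "B x \<ge> 0" using Bmono[of 0 x] x B0 by auto
    ultimately have "B x + K > 0" by simp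
    then show ?thesis unfolding gdef sdef K_def[symmetric] using True by simp
  next
    case False
    then have neg: "I 1 < 0" using I1 by simp
    then have "exp (I 1) < 1" by simp
    then have den: "exp (I 1) - 1 < 0" by simp
    have "B 1 + K = B 1 * exp (I 1) / (exp (I 1) - 1)" unfolding K_def using e1 by (simp add: field_simps)
    also have "\<dots> < 0" using B1 den by (simp add: divide_pos_neg)
    finally have "B 1 + K < 0" .
    moreover have "B x \<le> B 1" using Bmono[of x 1] x by auto
    ultimately have "B x + K < 0" by simp
    then show ?thesis unfolding gdef sdef K_def[symmetric] using False by (simp add: mult_neg_pos)
  qed
  show ?thesis using dg g01 gpos by blast
qed

theorem lemma4p2:
  fixes G G' V :: "real \<Rightarrow> real" and \<theta> :: real
  assumes G_deriv: "\<And>p. (G has_real_derivative G' p) (at p)"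
      and G'_cont: "continuous_on UNIV G'"
      and coercive: "filterlim G at_top at_top" "filterlim G at_top at_bot"
      and V_lip: "\<exists>L. L-lipschitz_on UNIV V"
      and V_per: "\<And>x. V (x + 1) = V x"
      and I_nz: "Ifun G G' V \<theta> 1 \<noteq> 0"
  shows "(Ifun G G' V \<theta> 1 > 0 \<longrightarrow>
            (\<exists>h0>0. \<forall>h. 0 < h \<and> h < h0 \<longrightarrow>
               (\<exists>\<theta>s. \<theta> < \<theta>s \<and> \<theta>s < \<theta> + h * bfun G G' V \<theta> \<and>
                     Hbar G V \<theta>s = Hbar G V \<theta> + h / 2 \<and>
                     Hbar G V \<theta> + h / 2 > Hbar G V \<theta>)))
       \<and> (Ifun G G' V \<theta> 1 < 0 \<longrightarrow>
            (\<exists>h0>0. \<forall>h. 0 < h \<and> h < h0 \<longrightarrow>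
               (\<exists>\<theta>s. \<theta> - h * bfun G G' V \<theta> < \<theta>s \<and> \<theta>s < \<theta> \<and>
                     Hbar G V \<theta>s = Hbar G V \<theta> + h / 2 \<and>
                     Hbar G V \<theta> + h / 2 > Hbar G V \<theta>)))"
proof -
  obtain L where "L-lipschitz_on UNIV V" using V_lip by blast
  then have Vcont: "continuous_on UNIV V" by (rule lipschitz_on_continuous_on)
  interpret ode G G' V
  proof
    show "(G has_real_derivative G' p) (at p)" for p by (rule G_deriv)
    show "continuous_on UNIV G'" by (rule G'_cont)
    show "continuous_on {0..1} V" by (rule continuous_on_subset[OF Vcont]) auto
  qed
  obtain c u where u: "psol c u" "integral {0..1} u = \<theta>" using exists_mean[OF coercive] by blast
  define f where "f = pext u"
  have cs: "cell_sol G V \<theta> c f" unfolding f_def using psol_cell[OF V_per Vcont u(1)] u(2) by simp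
  have Hf: "Hbar G V \<theta> = c" "fsol G V \<theta> = f" using Hbar_fsol[OF cs] by auto
  have pf: "psol c f" "integral {0..1} f = \<theta>" using cell_psol[OF cs] by auto
  have fc: "continuous_on {0..1} f" by (rule psol_cont[OF pf(1)])
  define a where "a y = G' (f y)" for y
  have ac: "continuous_on {0..1} a" unfolding a_def
    by (rule continuous_on_compose2[OF G'c fc]) auto
  define s :: real where "s = (if Ifun G G' V \<theta> 1 > 0 then 1 else -1)"
  have Idef: "Ifun G G' V \<theta> x = integral {0..x} a" for x unfolding Ifun_def a_def Hf by simp
  have gdef: "gfun G G' V \<theta> x = s * (Bfun G G' V \<theta> x + Bfun G G' V \<theta> 1 / (exp (Ifun G G' V \<theta> 1) - 1)) * exp (- Ifun G G' V \<theta> x)" for x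
    unfolding gfun_def s_def Let_def by simp
  have gp: "(\<forall>x\<in>{0..1}. (gfun G G' V \<theta> has_real_derivative s - a x * gfun G G' V \<theta> x) (at x within {0..1})) \<and>
      gfun G G' V \<theta> 0 = gfun G G' V \<theta> 1 \<and> (\<forall>x\<in>{0..1}. gfun G G' V \<theta> x > 0)"
  proof -
    have Bdef: "\<And>x. Bfun G G' V \<theta> x = integral {0..x} (\<lambda>y. exp (Ifun G G' V \<theta> y))" by (simp add: Bfun_def)
    show ?thesis by (rule gprops[OF ac Idef Bdef I_nz s_def gdef])
  qed
  have gd: "\<And>x. x \<in> {0..1} \<Longrightarrow> (gfun G G' V \<theta> has_real_derivative s - G' (f x) * gfun G G' V \<theta> x) (at x within {0..1})"
    using gp unfolding a_def by blast
  have g01: "gfun G G' V \<theta> 0 = gfun G G' V \<theta> 1" using gp by blast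
  have gpos: "\<And>x. x \<in> {0..1} \<Longrightarrow> gfun G G' V \<theta> x > 0" using gp by blast
  have gc: "continuous_on {0..1} (gfun G G' V \<theta>)" by (rule DERIV_continuous_on[OF gd])
  have bpos: "bfun G G' V \<theta> > 0" unfolding bfun_def by (rule integral_pos_cont[OF gc]) (use gpos in auto)
  have \<sigma>: "s = 1 \<or> s = -1" unfolding s_def by auto
  obtain h0 where h0: "h0 > 0" and H: "\<And>h. 0 < h \<Longrightarrow> h < h0 \<Longrightarrow> (\<exists>p. psol (c + h / 2) p \<and>
           min \<theta> (\<theta> + s * h * bfun G G' V \<theta>) < integral {0..1} p \<and>
           integral {0..1} p < max \<theta> (\<theta> + s * h * bfun G G' V \<theta>))"
    using core[OF pf(1) gd g01 gpos \<sigma>] pf(2) unfolding bfun_def by blast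
  have Hs: "Hbar G V (integral {0..1} p) = Hbar G V \<theta> + h / 2" if "psol (c + h / 2) p" for p h
  proof -
    have "cell_sol G V (integral {0..1} p) (c + h / 2) (pext p)" by (rule psol_cell[OF V_per Vcont that])
    then show ?thesis using Hbar_fsol Hf(1) by blast
  qed
  show ?thesis
  proof (intro conjI impI)
    assume pos: "Ifun G G' V \<theta> 1 > 0"
    then have s1: "s = 1" unfolding s_def by simp
    show "\<exists>h0>0. \<forall>h. 0 < h \<and> h < h0 \<longrightarrow> (\<exists>\<theta>s. \<theta> < \<theta>s \<and> \<theta>s < \<theta> + h * bfun G G' V \<theta> \<and>
                     Hbar G V \<theta>s = Hbar G V \<theta> + h / 2 \<and> Hbar G V \<theta> + h / 2 > Hbar G V \<theta>)"
    proof (rule exI[of _ h0], intro conjI allI impI h0)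
      fix h assume h: "0 < h \<and> h < h0"
      then obtain p where p: "psol (c + h / 2) p" "min \<theta> (\<theta> + s * h * bfun G G' V \<theta>) < integral {0..1} p"
        "integral {0..1} p < max \<theta> (\<theta> + s * h * bfun G G' V \<theta>)" using H by blast
      have "h * bfun G G' V \<theta> > 0" using h bpos by simp
      then have "\<theta> < integral {0..1} p" "integral {0..1} p < \<theta> + h * bfun G G' V \<theta>"
        using p(2,3) s1 by auto
      then show "\<exists>\<theta>s. \<theta> < \<theta>s \<and> \<theta>s < \<theta> + h * bfun G G' V \<theta> \<and>
                     Hbar G V \<theta>s = Hbar G V \<theta> + h / 2 \<and> Hbar G V \<theta> + h / 2 > Hbar G V \<theta>"
        using Hs[OF p(1)] h by (intro exI[of _ "integral {0..1} p"]) auto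
    qed
  next
    assume neg: "Ifun G G' V \<theta> 1 < 0"
    then have s1: "s = -1" unfolding s_def by simp
    show "\<exists>h0>0. \<forall>h. 0 < h \<and> h < h0 \<longrightarrow> (\<exists>\<theta>s. \<theta> - h * bfun G G' V \<theta> < \<theta>s \<and> \<theta>s < \<theta> \<and>
                     Hbar G V \<theta>s = Hbar G V \<theta> + h / 2 \<and> Hbar G V \<theta> + h / 2 > Hbar G V \<theta>)"
    proof (rule exI[of _ h0], intro conjI allI impI h0)
      fix h assume h: "0 < h \<and> h < h0"
      then obtain p where p: "psol (c + h / 2) p" "min \<theta> (\<theta> + s * h * bfun G G' V \<theta>) < integral {0..1} p"
        "integral {0..1} p < max \<theta> (\<theta> + s * h * bfun G G' V \<theta>)" using H by blast
      have "h * bfun G G' V \<theta> > 0" using h bpos by simp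
      then have "\<theta> - h * bfun G G' V \<theta> < integral {0..1} p" "integral {0..1} p < \<theta>"
        using p(2,3) s1 by auto
      then show "\<exists>\<theta>s. \<theta> - h * bfun G G' V \<theta> < \<theta>s \<and> \<theta>s < \<theta> \<and>
                     Hbar G V \<theta>s = Hbar G V \<theta> + h / 2 \<and> Hbar G V \<theta> + h / 2 > Hbar G V \<theta>"
        using Hs[OF p(1)] h by (intro exI[of _ "integral {0..1} p"]) auto
    qed
  qed
qed

end
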